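(* Let $k = \mathbb Z/(2)$, $U = k[X,Y,Z]$ the polynomial ring, $R = U/(XY(X+Y))$, let $x,y,z$ be the images of $X,Y,Z$ in $R$, and $A = k[x,y]\subseteq R$. Then: (1) $\overline R = R/xR\times R/yR\times R/(x+y)R$ and $\overline A = A/xA\times A/yA\times A/(x+y)A$ (with $R$, resp. $A$, embedded diagonally; via the canonical injections $A/xA\to R/xR$ etc., regard $\overline A\subseteq\overline R$). (2) With $\mathfrak m = (x,y)A$ and $\rho = (\overline y, 0, 0)\in\overline A$, the strict closure $A^*$ of $A$ in $\overline A$ is $A^* = A + \mathfrak m\overline A = A + k\rho$, and $\ell_A(A^*/A) = 1$. (3) $A = A^a \subsetneq A^*$. (4) $R^* = A^*[z] = R + k[z]\cdot\rho$ and $R^a = R + k[z]\cdot z(1+z)\rho$; hence $R\subsetneq R^a\subsetneq R^*$. Here $R^*$ is the strict closure of $R$ in $\overline R$, and $A^a$, $R^a$ are weakly Arf closures.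
   Context: For a commutative ring $B$, $W(B)$ is the set of non-zerodivisors, $\mathrm{Q}(B)$ the total ring of fractions, $\overline B$ the integral closure of $B$ in $\mathrm{Q}(B)$; $\overline{(\cdot)}$ on components denotes images in the corresponding quotient ring. The strict closure of $B$ in $C\supseteq B$ is $\{\alpha \in C \mid \alpha\otimes 1 = 1\otimes \alpha \text{ in } C\otimes_B C\}$. $B$ is weakly Arf if for all $a,b,c\in B$ with $a\in W(B)$ and $\frac ba,\frac ca\in\overline B$ one has $\frac{bc}{a}\in B$. Weakly Arf closure: $B_1 = B[\frac{bc}{a}\mid a\in W(B),\ b,c\in B,\ \frac ba,\frac ca\in\overline B]$, $B_0=B$, $B_n=(B_{n-1})_1$, and $B^a=\bigcup_n B_n$ (the smallest weakly Arf ring between $B$ and $\overline B$). $\ell_A$ denotes length as $A$-module. *)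

theory Defs
  imports "HOL-Library.Z2" "HOL-Library.Function_Algebras" "HOL-Library.Poly_Mapping"
          "HOL-Library.Extended_Nat"
          "HOL-Computational_Algebra.Polynomial" "HOL-Computational_Algebra.Fraction_Field"
begin

text \<open>All rings below are unital subrings of an ambient commutative ring of type 'a.
  The ambient ring is chosen large enough to contain the total rings of fractions
  of all rings considered (every non-zerodivisor of those rings is a unit of the
  ambient ring), so Q(B) is realised as a subset of the ambient ring.\<close>

inductive_set ring_gen :: "'a::comm_ring_1 set \<Rightarrow> 'a set" for S where
  gen: "s \<in> S \<Longrightarrow> s \<in> ring_gen S"
| one: "1 \<in> ring_gen S"
| add: "u \<in> ring_gen S \<Longrightarrow> v \<in> ring_gen S \<Longrightarrow> u + v \<in> ring_gen S"
| neg: "u \<in> ring_gen S \<Longrightarrow> - u \<in> ring_gen S"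
| mult: "u \<in> ring_gen S \<Longrightarrow> v \<in> ring_gen S \<Longrightarrow> u * v \<in> ring_gen S"

definition nzd :: "'a::comm_ring_1 set \<Rightarrow> 'a set" where
  "nzd B = {a \<in> B. \<forall>b\<in>B. a * b = 0 \<longrightarrow> b = 0}"

definition tot_quot :: "'a::comm_ring_1 set \<Rightarrow> 'a set" where
  "tot_quot B = {q. \<exists>a\<in>nzd B. a * q \<in> B}"

definition int_closure :: "'a::comm_ring_1 set \<Rightarrow> 'a set" where
  "int_closure B = {q \<in> tot_quot B. \<exists>n cs. (\<forall>i<n. cs i \<in> B) \<and>
                       q ^ n + (\<Sum>i<n. cs i * q ^ i) = 0}"

text \<open>Tensor product C \<otimes>_B C: the free abelian group on C \<times> C modulo the
  B-balanced bilinearity relations.  tensor_rel B C is the subgroup of relations.\<close>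
inductive_set tensor_rel :: "'a::comm_ring_1 set \<Rightarrow> 'a set \<Rightarrow> (('a \<times> 'a) \<Rightarrow>\<^sub>0 int) set"
  for B C where
  zero: "0 \<in> tensor_rel B C"
| addl: "c \<in> C \<Longrightarrow> c' \<in> C \<Longrightarrow> d \<in> C \<Longrightarrow>
     Poly_Mapping.single (c + c', d) 1 - Poly_Mapping.single (c, d) 1
       - Poly_Mapping.single (c', d) 1 \<in> tensor_rel B C"
| addr: "c \<in> C \<Longrightarrow> d \<in> C \<Longrightarrow> d' \<in> C \<Longrightarrow>
     Poly_Mapping.single (c, d + d') 1 - Poly_Mapping.single (c, d) 1
       - Poly_Mapping.single (c, d') 1 \<in> tensor_rel B C"
| bal: "c \<in> C \<Longrightarrow> d \<in> C \<Longrightarrow> b \<in> B \<Longrightarrow>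
     Poly_Mapping.single (c * b, d) 1 - Poly_Mapping.single (c, b * d) 1 \<in> tensor_rel B C"
| plus: "u \<in> tensor_rel B C \<Longrightarrow> v \<in> tensor_rel B C \<Longrightarrow> u + v \<in> tensor_rel B C"
| uminus: "u \<in> tensor_rel B C \<Longrightarrow> - u \<in> tensor_rel B C"

definition strict_closure :: "'a::comm_ring_1 set \<Rightarrow> 'a set \<Rightarrow> 'a set" where
  "strict_closure B C = {\<alpha> \<in> C.
     Poly_Mapping.single (\<alpha>, 1) 1 - Poly_Mapping.single (1, \<alpha>) 1 \<in> tensor_rel B C}"

definition wa_step :: "'a::comm_ring_1 set \<Rightarrow> 'a set" where
  "wa_step B = ring_gen (B \<union> {q \<in> tot_quot B. \<exists>a\<in>nzd B. \<exists>b\<in>B. \<exists>c\<in>B.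
      (\<exists>u\<in>int_closure B. a * u = b) \<and> (\<exists>v\<in>int_closure B. a * v = c) \<and> a * q = b * c})"

definition wa_closure :: "'a::comm_ring_1 set \<Rightarrow> 'a set" where
  "wa_closure B = (\<Union>n. (wa_step ^^ n) B)"

definition submod :: "'a::comm_ring_1 set \<Rightarrow> 'a set \<Rightarrow> bool" where
  "submod A L \<longleftrightarrow> 0 \<in> L \<and> (\<forall>u\<in>L. \<forall>v\<in>L. u + v \<in> L) \<and> (\<forall>u\<in>L. - u \<in> L)
                  \<and> (\<forall>a\<in>A. \<forall>u\<in>L. a * u \<in> L)"

definition mod_length :: "'a::comm_ring_1 set \<Rightarrow> 'a set \<Rightarrow> 'a set \<Rightarrow> enat" where
  "mod_length A M N = (SUP n \<in> {n. \<exists>L. L 0 = M \<and> L n = N \<and> (\<forall>i<n. L i \<subset> L (Suc i))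
                                   \<and> (\<forall>i\<le>n. submod A (L i))}. enat n)"

inductive_set ext_ideal :: "'a::comm_ring_1 set \<Rightarrow> 'a set \<Rightarrow> 'a set" for I C where
  zero: "0 \<in> ext_ideal I C"
| prod: "i \<in> I \<Longrightarrow> c \<in> C \<Longrightarrow> i * c \<in> ext_ideal I C"
| add: "u \<in> ext_ideal I C \<Longrightarrow> v \<in> ext_ideal I C \<Longrightarrow> u + v \<in> ext_ideal I C"

text \<open>Field k = Z/(2) is the type bit.  K = k(s,t) = fraction field of k[s][t].
  The ambient ring is T = K \<times> K \<times> K, realised as functions cmp \<Rightarrow> K.\<close>

datatype cmp = C1 | C2 | C3

type_synonym K = "bit poly poly fract"
type_synonym T = "cmp \<Rightarrow> K"

definition kemb :: "bit \<Rightarrow> 'b::comm_ring_1" where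
  "kemb c = (if c = 0 then 0 else 1)"

definition var_s :: K where "var_s = Fract [:[:0, 1:]:] 1"
definition var_t :: K where "var_t = Fract [:0, 1:] 1"

text \<open>Component 1 is R/xR (x\<mapsto>0, y\<mapsto>s, z\<mapsto>t), component 2 is R/yR (x\<mapsto>s, y\<mapsto>0, z\<mapsto>t),
  component 3 is R/(x+y)R (x\<mapsto>s, y\<mapsto>-s = s, z\<mapsto>t).\<close>
definition xx :: T where "xx = (\<lambda>i. case i of C1 \<Rightarrow> 0 | C2 \<Rightarrow> var_s | C3 \<Rightarrow> var_s)"
definition yy :: T where "yy = (\<lambda>i. case i of C1 \<Rightarrow> var_s | C2 \<Rightarrow> 0 | C3 \<Rightarrow> - var_s)"
definition zz :: T where "zz = (\<lambda>i. var_t)"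

text \<open>Evaluation U = k[X,Y,Z] \<rightarrow> T, X\<mapsto>x, Y\<mapsto>y, Z\<mapsto>z.  A polynomial in U is
  represented as bit poly poly poly, with X innermost and Z outermost.\<close>
definition eval3 :: "bit poly poly poly \<Rightarrow> T" where
  "eval3 f = poly (map_poly (\<lambda>g. poly (map_poly (\<lambda>h. poly (map_poly kemb h) xx) g) yy) f) zz"

definition polyX :: "bit poly poly poly" where "polyX = [:[:[:0, 1:]:]:]"
definition polyY :: "bit poly poly poly" where "polyY = [:[:0, 1:]:]"

text \<open>R = k[x,y,z] = image of U; A = k[x,y].  (k = {0,1} is the prime field.)\<close>
definition RR :: "T set" where "RR = ring_gen {xx, yy, zz}"
definition AA :: "T set" where "AA = ring_gen {xx, yy}"

definition kk :: "T set" where "kk = range kemb"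

definition rho :: T where "rho = (\<lambda>i. if i = C1 then yy C1 else 0)"

end

theory Submission
  imports Defs "HOL-Computational_Algebra.Normalized_Fraction" "HOL-Computational_Algebra.Field_as_Ring" "HOL-Computational_Algebra.Polynomial_Factorial"
begin


type_synonym P = "bit poly poly"

definition emb :: "P \<Rightarrow> K" where "emb p = Fract p 1"

lemma emb_add: "emb (a + b) = emb a + emb b" by (simp add: emb_def)
lemma emb_mult: "emb (a * b) = emb a * emb b" by (simp add: emb_def)
lemma emb_uminus: "emb (- a) = - emb a" by (simp add: emb_def)
lemma emb_diff: "emb (a - b) = emb a - emb b" by (simp add: emb_def)
lemma emb_0[simp]: "emb 0 = 0" by (simp add: emb_def Zero_fract_def)
lemma emb_1[simp]: "emb 1 = 1" by (simp add: emb_def One_fract_def)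
lemma emb_inj: "emb a = emb b \<longleftrightarrow> a = b" by (simp add: emb_def eq_fract)
lemma emb_eq_0: "emb a = 0 \<longleftrightarrow> a = 0" using emb_inj[of a 0] by simp
lemma emb_power: "emb (a ^ n) = emb a ^ n" by (induct n) (auto simp: emb_mult)

lemma bit_char2: "(x::bit) + x = 0" by (cases x) auto
lemma P_char2: "(x::'a::comm_ring_1 poly) + x = 0 \<Longrightarrow> True" by simp

lemma bitpoly_char2: "(p::bit poly) + p = 0"
  by (rule poly_eqI) (metis coeff_add coeff_0 bit_char2)
lemma P_char2': "(p::P) + p = 0"
  by (rule poly_eqI) (metis coeff_add coeff_0 bitpoly_char2)
lemma bitpoly_neg: "- (p::bit poly) = p"
  using bitpoly_char2[of p] by (metis add_eq_0_iff)
lemma P_neg: "- (p::P) = p"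
  using P_char2'[of p] by (metis add_eq_0_iff)
lemma K_char2: "(x::K) + x = 0"
proof -
  obtain a b where "x = Fract a b" "b \<noteq> 0" by (cases x) auto
  then show ?thesis by (simp add: P_char2' Zero_fract_def eq_fract)
qed
lemma K_neg: "- (x::K) = x" using K_char2[of x] by (metis add_eq_0_iff)
lemma T_neg: "- (x::T) = x" by (rule ext) (simp add: K_neg)
lemma T_char2: "(x::T) + x = 0" by (rule ext) (simp only: plus_fun_def zero_fun_def K_char2)
lemma bit_neg: "- (x::bit) = x" by simp

lemma K_two: "(2::K) = 0" using K_char2[of 1] by (simp add: one_add_one)
lemma T_two: "(2::T) = 0" using T_char2[of 1] by (simp add: one_add_one)
lemma P_two: "(2::P) = 0" using P_char2'[of 1] by (simp add: one_add_one)
lemma bp_two: "(2::bit poly) = 0" using bitpoly_char2[of 1] by (simp add: one_add_one)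

definition is_hom :: "('a::comm_ring_1 \<Rightarrow> 'b::comm_ring_1) \<Rightarrow> bool" where
  "is_hom f \<longleftrightarrow> (\<forall>a b. f (a+b) = f a + f b) \<and> (\<forall>a b. f (a*b) = f a * f b) \<and> f 1 = 1"

lemma hom_add: "is_hom f \<Longrightarrow> f (a+b) = f a + f b" by (simp add: is_hom_def)
lemma hom_mult: "is_hom f \<Longrightarrow> f (a*b) = f a * f b" by (simp add: is_hom_def)
lemma hom_1: "is_hom f \<Longrightarrow> f 1 = 1" by (simp add: is_hom_def)
lemma hom_0: "is_hom f \<Longrightarrow> f 0 = 0"
  using hom_add[of f 0 0] by simp
lemma hom_uminus: "is_hom f \<Longrightarrow> f (- a) = - f a"
  using hom_add[of f a "-a"] hom_0[of f] by (simp add: eq_neg_iff_add_eq_0 add.commute)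
lemma hom_diff: "is_hom f \<Longrightarrow> f (a - b) = f a - f b"
  using hom_add[of f a "-b"] hom_uminus[of f b] by simp
lemma hom_sum: "is_hom f \<Longrightarrow> f (sum g A) = (\<Sum>x\<in>A. f (g x))"
  by (induct A rule: infinite_finite_induct) (auto simp: hom_0 hom_add)
lemma hom_power: "is_hom f \<Longrightarrow> f (a ^ n) = f a ^ n"
  by (induct n) (auto simp: hom_1 hom_mult)
lemma hom_comp: "is_hom f \<Longrightarrow> is_hom g \<Longrightarrow> is_hom (g \<circ> f)"
  by (simp add: is_hom_def)

lemma map_poly_add_hom: "is_hom f \<Longrightarrow> map_poly f (p + q) = map_poly f p + map_poly f q"
  by (rule poly_eqI) (simp add: coeff_map_poly hom_0 hom_add)
lemma map_poly_mult_hom: "is_hom f \<Longrightarrow> map_poly f (p * q) = map_poly f p * map_poly f q"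
  by (rule poly_eqI) (simp add: coeff_map_poly hom_0 hom_mult coeff_mult hom_sum)
lemma map_poly_1_hom: "is_hom f \<Longrightarrow> map_poly f 1 = 1"
  by (simp add: hom_1)

lemma poly_map_hom: "is_hom f \<Longrightarrow> is_hom (\<lambda>p. poly (map_poly f p) x)"
  unfolding is_hom_def[of "\<lambda>p. poly (map_poly f p) x"]
  by (simp add: map_poly_add_hom map_poly_mult_hom hom_1)

lemma hom_poly_commute: "is_hom g \<Longrightarrow> g (poly p x) = poly (map_poly g p) (g x)"
  by (induct p) (auto simp: map_poly_pCons hom_0 hom_add hom_mult)

lemma map_poly_poly_comp: "is_hom g \<Longrightarrow> f 0 = 0 \<Longrightarrow> g (poly (map_poly f p) x) = poly (map_poly (g \<circ> f) p) (g x)"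
  by (induct p) (auto simp: map_poly_pCons hom_0 hom_add hom_mult)

lemma ring_gen_0: "0 \<in> ring_gen S"
  using ring_gen.add[OF ring_gen.one ring_gen.neg[OF ring_gen.one]] by simp
lemma ring_gen_diff: "u \<in> ring_gen S \<Longrightarrow> v \<in> ring_gen S \<Longrightarrow> u - v \<in> ring_gen S"
  using ring_gen.add[OF _ ring_gen.neg] by (metis diff_conv_add_uminus)

lemma poly_map_in_ring_gen:
  assumes "\<And>a. f a \<in> ring_gen S" "x \<in> ring_gen S" "f 0 = 0"
  shows "poly (map_poly f p) x \<in> ring_gen S"
  by (induct p) (auto simp: map_poly_pCons assms ring_gen_0 intro!: ring_gen.add ring_gen.mult)

lemma kemb_K_hom: "is_hom (kemb :: bit \<Rightarrow> K)"
  unfolding is_hom_def kemb_def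
  by (auto simp: K_char2)

lemma kemb_T_hom: "is_hom (kemb :: bit \<Rightarrow> T)"
  unfolding is_hom_def kemb_def
  by (auto simp: T_char2)

lemma kemb_0[simp]: "kemb 0 = 0" by (simp add: kemb_def)
lemma kemb_1[simp]: "kemb 1 = 1" by (simp add: kemb_def)
lemma kemb_apply: "(kemb c :: T) i = kemb c" by (simp add: kemb_def)

lemma emb_hom: "is_hom emb" by (simp add: is_hom_def emb_add emb_mult)
lemma eval_hom: "is_hom (\<lambda>v::T. v i)" by (simp add: is_hom_def)

definition sP :: P where "sP = [:[:0,1:]:]"
definition tP :: P where "tP = [:0,1:]"
lemma var_s_emb: "var_s = emb sP" by (simp add: var_s_def emb_def sP_def)
lemma var_t_emb: "var_t = emb tP" by (simp add: var_t_def emb_def tP_def)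

lemma emb_const_const: "emb [:[:b:]:] = kemb b"
  by (cases b) (auto simp: kemb_def emb_def Zero_fract_def One_fract_def one_pCons)

lemma EV_inner: "emb [:q:] = poly (map_poly kemb q) var_s"
proof (induct q)
  case 0 then show ?case by simp
next
  case (pCons b q)
  have "[:pCons b q:] = [:[:b:]:] + sP * [:q:]"
    by (simp add: sP_def)
  then have "emb [:pCons b q:] = kemb b + var_s * emb [:q:]"
    by (simp only: emb_add emb_mult emb_const_const var_s_emb)
  then show ?case using pCons by (simp add: map_poly_pCons)
qed

lemma EV: "emb p = poly (map_poly (\<lambda>q. poly (map_poly kemb q) var_s) p) var_t"
proof (induct p)
  case 0 then show ?case by simp
next
  case (pCons a p)
  have "pCons a p = [:a:] + tP * p"
    by (simp add: tP_def)
  then have "emb (pCons a p) = emb [:a:] + var_t * emb p"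
    by (simp only: emb_add emb_mult var_t_emb)
  then show ?case using pCons by (simp add: map_poly_pCons EV_inner)
qed


definition c0 :: "P \<Rightarrow> bit poly" where "c0 p = map_poly (\<lambda>q. coeff q 0) p"
definition c1 :: "P \<Rightarrow> bit poly" where "c1 p = map_poly (\<lambda>q. coeff q 1) p"
definition cst :: "bit poly \<Rightarrow> P" where "cst a = map_poly (\<lambda>b. [:b:]) a"
definition rest2 :: "P \<Rightarrow> P" where "rest2 p = map_poly (poly_shift 2) p"

lemma coeff_c0: "coeff (c0 p) n = coeff (coeff p n) 0" by (simp add: c0_def coeff_map_poly)
lemma coeff_c1: "coeff (c1 p) n = coeff (coeff p n) 1" by (simp add: c1_def coeff_map_poly)
lemma coeff_cst: "coeff (cst a) n = [:coeff a n:]" by (simp add: cst_def coeff_map_poly)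
lemma coeff_rest2: "coeff (rest2 p) n = poly_shift 2 (coeff p n)" by (simp add: rest2_def coeff_map_poly)

lemma coeff0_hom: "is_hom (\<lambda>q::bit poly. coeff q 0)"
  by (simp add: is_hom_def coeff_mult_0)
lemma c0_add: "c0 (p + q) = c0 p + c0 q" by (rule poly_eqI) (simp add: coeff_c0)
lemma c1_add: "c1 (p + q) = c1 p + c1 q" by (rule poly_eqI) (simp add: coeff_c1)
lemma c0_mult: "c0 (p * q) = c0 p * c0 q"
  unfolding c0_def by (rule map_poly_mult_hom[OF coeff0_hom])
lemma c0_1[simp]: "c0 1 = 1" by (rule poly_eqI) (simp add: coeff_c0 coeff_1)
lemma c1_1[simp]: "c1 1 = 0" by (rule poly_eqI) (simp add: coeff_c1 coeff_1)
lemma c0_0[simp]: "c0 0 = 0" by (simp add: c0_def)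
lemma c1_0[simp]: "c1 0 = 0" by (simp add: c1_def)

lemma coeff1_mult: "coeff ((a::'a::comm_semiring_1 poly) * b) 1 = coeff a 1 * coeff b 0 + coeff a 0 * coeff b 1"
  by (simp add: coeff_mult atMost_Suc add.commute)

lemma c1_mult_gen:
  fixes p q :: "'a::comm_semiring_1 poly poly"
  shows "map_poly (\<lambda>r. coeff r 1) (p * q) =
     map_poly (\<lambda>r. coeff r 1) p * map_poly (\<lambda>r. coeff r 0) q + map_poly (\<lambda>r. coeff r 0) p * map_poly (\<lambda>r. coeff r 1) q"
proof (rule poly_eqI)
  fix n
  have "coeff (map_poly (\<lambda>r. coeff r 1) (p * q)) n = (\<Sum>i\<le>n. coeff (coeff p i * coeff q (n - i)) 1)"
    by (simp add: coeff_map_poly coeff_mult coeff_sum)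
  also have "\<dots> = (\<Sum>i\<le>n. coeff (coeff p i) 1 * coeff (coeff q (n - i)) 0 + coeff (coeff p i) 0 * coeff (coeff q (n - i)) 1)"
    by (simp only: coeff1_mult)
  also have "\<dots> = coeff (map_poly (\<lambda>r. coeff r 1) p * map_poly (\<lambda>r. coeff r 0) q + map_poly (\<lambda>r. coeff r 0) p * map_poly (\<lambda>r. coeff r 1) q) n"
    by (simp add: coeff_mult sum.distrib coeff_map_poly)
  finally show "coeff (map_poly (\<lambda>r. coeff r 1) (p * q)) n = coeff (map_poly (\<lambda>r. coeff r 1) p * map_poly (\<lambda>r. coeff r 0) q + map_poly (\<lambda>r. coeff r 0) p * map_poly (\<lambda>r. coeff r 1) q) n" .
qed

lemma c1_mult: "c1 (p * q) = c1 p * c0 q + c0 p * c1 q"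
  unfolding c0_def c1_def by (rule c1_mult_gen)

lemma c0_cst[simp]: "c0 (cst a) = a" by (rule poly_eqI) (simp add: coeff_c0 coeff_cst)
lemma c1_cst[simp]: "c1 (cst a) = 0" by (rule poly_eqI) (simp add: coeff_c1 coeff_cst)
lemma c0_sP[simp]: "c0 sP = 0" by (rule poly_eqI) (simp add: coeff_c0 sP_def coeff_pCons split: nat.split)
lemma c1_sP[simp]: "c1 sP = 1" by (rule poly_eqI) (simp add: coeff_c1 sP_def coeff_pCons coeff_1 split: nat.split)
lemma cst_add: "cst (a + b) = cst a + cst b" by (rule poly_eqI) (simp add: coeff_cst)
lemma cst_0[simp]: "cst 0 = 0" by (simp add: cst_def)
lemma cst_1[simp]: "cst 1 = 1" by (simp add: cst_def)
lemma cst_hom: "is_hom cst"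
  unfolding cst_def is_hom_def
  by (auto intro!: map_poly_add_hom map_poly_mult_hom simp: is_hom_def)
lemma cst_mult: "cst (a * b) = cst a * cst b" using cst_hom by (simp add: hom_mult)

lemma sP_mult_coeff: "coeff (sP * p) n = [:0,1:] * coeff p n"
  by (simp add: sP_def)

lemma decomp_inner: "(q::bit poly) = [:coeff q 0:] + [:0,1:] * [:coeff q 1:] + [:0,1:]^2 * poly_shift 2 q"
proof (rule poly_eqI)
  fix n
  show "coeff q n = coeff ([:coeff q 0:] + [:0,1:] * [:coeff q 1:] + [:0,1:]^2 * poly_shift 2 q) n"
    by (cases n; cases "n - 1") (auto simp: coeff_pCons power2_eq_square coeff_poly_shift numeral_2_eq_2)
qed

lemma decomp: "p = cst (c0 p) + sP * cst (c1 p) + sP^2 * rest2 p"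
proof (rule poly_eqI)
  fix n
  have "sP^2 = [:[:0,1:]^2:]" by (simp add: sP_def power2_eq_square)
  then show "coeff p n = coeff (cst (c0 p) + sP * cst (c1 p) + sP^2 * rest2 p) n"
    using decomp_inner[of "coeff p n"]
    by (simp add: coeff_cst coeff_c0 coeff_c1 coeff_rest2 sP_def)
qed


definition tr :: "(cmp \<Rightarrow> P) \<Rightarrow> T" where "tr g = (\<lambda>i. emb (g i))"

lemma tr_apply[simp]: "tr g i = emb (g i)" by (simp add: tr_def)
lemma tr_add: "tr g + tr h = tr (\<lambda>i. g i + h i)" by (rule ext) (simp add: emb_add)
lemma tr_mult: "tr g * tr h = tr (\<lambda>i. g i * h i)" by (rule ext) (simp add: emb_mult)
lemma tr_1: "1 = tr (\<lambda>_. 1)" by (rule ext) simp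
lemma tr_0: "0 = tr (\<lambda>_. 0)" by (rule ext) simp
lemma tr_inj: "tr g = tr h \<longleftrightarrow> g = h"
  by (auto simp: fun_eq_iff emb_inj tr_def)
lemma cmp_all: "(\<forall>i. P i) \<longleftrightarrow> P C1 \<and> P C2 \<and> P C3"
  by (metis cmp.exhaust)

lemma xx_tr: "xx = tr (\<lambda>i. case i of C1 \<Rightarrow> 0 | C2 \<Rightarrow> sP | C3 \<Rightarrow> sP)"
  by (rule ext) (auto simp: xx_def var_s_emb split: cmp.split)
lemma yy_tr: "yy = tr (\<lambda>i. case i of C1 \<Rightarrow> sP | C2 \<Rightarrow> 0 | C3 \<Rightarrow> sP)"
  by (rule ext) (auto simp: yy_def var_s_emb K_neg split: cmp.split)
lemma zz_tr: "zz = tr (\<lambda>i. tP)"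
  by (rule ext) (auto simp: zz_def var_t_emb)
lemma rho_tr: "rho = tr (\<lambda>i. case i of C1 \<Rightarrow> sP | C2 \<Rightarrow> 0 | C3 \<Rightarrow> 0)"
  by (rule ext) (auto simp: rho_def yy_def var_s_emb split: cmp.split)

definition Dc :: "P set" where "Dc = {p. degree p = 0}"

definition Bset :: "P set \<Rightarrow> bit poly set \<Rightarrow> T set" where
  "Bset D I = {tr g | g. (\<forall>i. g i \<in> D) \<and> c0 (g C2) = c0 (g C1) \<and> c0 (g C3) = c0 (g C1)
       \<and> c1 (g C1) + c1 (g C2) + c1 (g C3) \<in> I}"

definition Full :: "P set \<Rightarrow> T set" where "Full D = {tr g | g. \<forall>i. g i \<in> D}"

definition okD :: "P set \<Rightarrow> bool" where
  "okD D \<longleftrightarrow> 0 \<in> D \<and> 1 \<in> D \<and> (\<forall>a\<in>D. \<forall>b\<in>D. a + b \<in> D \<and> a * b \<in> D)"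

definition okI :: "P set \<Rightarrow> bit poly set \<Rightarrow> bool" where
  "okI D I \<longleftrightarrow> 0 \<in> I \<and> (\<forall>x\<in>I. \<forall>y\<in>I. x + y \<in> I) \<and> (\<forall>p\<in>D. \<forall>x\<in>I. c0 p * x \<in> I)"

lemma okD_UNIV: "okD UNIV" by (simp add: okD_def)
lemma okD_Dc: "okD Dc"
proof -
  have "degree (a + b) = 0 \<and> degree (a * b) = 0" if "degree a = 0" "degree b = 0" for a b :: P
    using degree_add_le[of a 0 b] degree_mult_le[of a b] that by simp
  then show ?thesis by (simp add: okD_def Dc_def)
qed

lemma Bset_mem: "tr g \<in> Bset D I \<longleftrightarrow> (\<forall>i. g i \<in> D) \<and> c0 (g C2) = c0 (g C1) \<and> c0 (g C3) = c0 (g C1)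
       \<and> c1 (g C1) + c1 (g C2) + c1 (g C3) \<in> I"
  by (auto simp: Bset_def tr_inj)

lemma Full_mem: "tr g \<in> Full D \<longleftrightarrow> (\<forall>i. g i \<in> D)"
  by (auto simp: Full_def tr_inj)

lemma Bset_Full: "Bset D I \<subseteq> Full D" by (auto simp: Bset_def Full_def)

lemma Bset_1: "okD D \<Longrightarrow> okI D I \<Longrightarrow> 1 \<in> Bset D I"
  unfolding tr_1 Bset_mem by (simp add: okD_def okI_def)

lemma Bset_add: assumes "okD D" "okI D I" "v \<in> Bset D I" "w \<in> Bset D I" shows "v + w \<in> Bset D I"
proof -
  obtain g h where v: "v = tr g" and w: "w = tr h" using assms(3,4) by (auto simp: Bset_def)
  have "c1 (g C1 + h C1) + c1 (g C2 + h C2) + c1 (g C3 + h C3)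
      = (c1 (g C1) + c1 (g C2) + c1 (g C3)) + (c1 (h C1) + c1 (h C2) + c1 (h C3))"
    by (simp add: c1_add algebra_simps)
  then show ?thesis using assms unfolding v w tr_add Bset_mem okD_def okI_def
    by (auto simp: c0_add)
qed

lemma Bset_mult: assumes "okD D" "okI D I" "v \<in> Bset D I" "w \<in> Bset D I" shows "v * w \<in> Bset D I"
proof -
  obtain g h where v: "v = tr g" and w: "w = tr h" using assms(3,4) by (auto simp: Bset_def)
  from assms(3,4) have g: "(\<forall>i. g i \<in> D) \<and> c0 (g C2) = c0 (g C1) \<and> c0 (g C3) = c0 (g C1)
       \<and> c1 (g C1) + c1 (g C2) + c1 (g C3) \<in> I" and h: "(\<forall>i. h i \<in> D) \<and> c0 (h C2) = c0 (h C1) \<and> c0 (h C3) = c0 (h C1)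
       \<and> c1 (h C1) + c1 (h C2) + c1 (h C3) \<in> I" unfolding v w Bset_mem by auto
  have "c1 (g C1 * h C1) + c1 (g C2 * h C2) + c1 (g C3 * h C3)
      = c0 (h C1) * (c1 (g C1) + c1 (g C2) + c1 (g C3)) + c0 (g C1) * (c1 (h C1) + c1 (h C2) + c1 (h C3))"
    using g h by (simp add: c1_mult algebra_simps)
  moreover have "c0 (h C1) * (c1 (g C1) + c1 (g C2) + c1 (g C3)) \<in> I"
       "c0 (g C1) * (c1 (h C1) + c1 (h C2) + c1 (h C3)) \<in> I"
    using g h assms(2) by (auto simp: okI_def)
  ultimately show ?thesis using assms g h unfolding v w tr_mult Bset_mem okD_def okI_def
    by (auto simp: c0_mult)
qed

lemma Bset_neg: "v \<in> Bset D I \<Longrightarrow> - v \<in> Bset D I" by (simp add: T_neg)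

lemma ring_gen_Bset: assumes "okD D" "okI D I" "S \<subseteq> Bset D I" shows "ring_gen S \<subseteq> Bset D I"
proof
  fix x assume "x \<in> ring_gen S"
  then show "x \<in> Bset D I"
    by (induct rule: ring_gen.induct) (use assms in \<open>blast intro: Bset_add Bset_mult Bset_neg Bset_1\<close>)+
qed

lemma ring_gen_mono: "S \<subseteq> S' \<Longrightarrow> ring_gen S \<subseteq> ring_gen S'"
proof
  fix x assume a: "S \<subseteq> S'" and "x \<in> ring_gen S" from this(2) show "x \<in> ring_gen S'"
    by (induct rule: ring_gen.induct) (use a in \<open>blast intro: ring_gen.intros\<close>)+
qed

lemma ring_gen_sub: assumes "S \<subseteq> ring_gen S'" shows "ring_gen S \<subseteq> ring_gen S'"
proof
  fix x assume "x \<in> ring_gen S" then show "x \<in> ring_gen S'"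
    by (induct rule: ring_gen.induct) (use assms in \<open>blast intro: ring_gen.intros\<close>)+
qed


lemma map_poly_const[simp]: "f 0 = 0 \<Longrightarrow> map_poly f [:c:] = [:f c:]"
  by (simp add: map_poly_pCons)

lemma poly_map_kemb_0[simp]: "poly (map_poly kemb 0) w = 0" by simp

definition Lt :: "bit poly \<Rightarrow> T" where "Lt a = poly (map_poly kemb a) zz"
definition Lg :: "T \<Rightarrow> P \<Rightarrow> T" where "Lg w p = poly (map_poly (\<lambda>q. poly (map_poly kemb q) w) p) zz"

lemma kemb_fun: "(\<lambda>v::T. v i) \<circ> kemb = kemb"
  by (rule ext) (simp add: kemb_apply)

lemma eval_poly_T: "(poly (map_poly f p) (x::T)) i = poly (map_poly (\<lambda>c. f c i) p) (x i)" if "f 0 = 0"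
  using map_poly_poly_comp[of "\<lambda>v. v i" f p x, OF eval_hom that] by (simp add: o_def)

lemma Lt_apply: "Lt a i = emb (cst a)"
proof -
  have "Lt a i = poly (map_poly kemb a) var_t"
    unfolding Lt_def by (subst eval_poly_T) (simp_all add: zz_def kemb_apply)
  also have "\<dots> = emb (cst a)"
    unfolding EV cst_def by (subst map_poly_map_poly) (simp_all add: o_def)
  finally show ?thesis .
qed

lemma Lt_tr: "Lt a = tr (\<lambda>_. cst a)" by (rule ext) (simp add: Lt_apply)

lemma Lg_apply: "Lg w p i = poly (map_poly (\<lambda>q. poly (map_poly kemb q) (w i)) p) var_t"
  unfolding Lg_def by (subst eval_poly_T) (simp_all add: zz_def eval_poly_T kemb_apply)

lemma Lg_apply_s: "w i = var_s \<Longrightarrow> Lg w p i = emb p"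
  by (simp add: Lg_apply EV)

lemma kemb_in_ring_gen: "kemb c \<in> ring_gen S"
  by (cases c) (auto simp: ring_gen_0 intro: ring_gen.one)

lemma Lt_in: "zz \<in> ring_gen S \<Longrightarrow> Lt a \<in> ring_gen S"
  unfolding Lt_def by (rule poly_map_in_ring_gen) (auto simp: kemb_in_ring_gen)

lemma Lg_in: "zz \<in> ring_gen S \<Longrightarrow> w \<in> ring_gen S \<Longrightarrow> Lg w p \<in> ring_gen S"
  unfolding Lg_def by (rule poly_map_in_ring_gen) (auto intro!: poly_map_in_ring_gen simp: kemb_in_ring_gen)

lemma Lg_const: "Lg w [:q:] = poly (map_poly kemb q) w"
  by (simp add: Lg_def)

lemma Lt_const: "Lt [:b:] = kemb b"
  by (simp add: Lt_def)

lemma zz_RR: "zz \<in> RR" and xx_RR: "xx \<in> RR" and yy_RR: "yy \<in> RR"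
  by (auto simp: RR_def intro: ring_gen.gen)
lemma xx_AA: "xx \<in> AA" and yy_AA: "yy \<in> AA"
  by (auto simp: AA_def intro: ring_gen.gen)

lemma xx_apply: "xx C1 = 0" "xx C2 = var_s" "xx C3 = var_s" by (simp_all add: xx_def)
lemma yy_apply: "yy C1 = var_s" "yy C2 = 0" "yy C3 = var_s" by (simp_all add: yy_def K_neg)

lemma emb_decomp: "emb p = emb (cst (c0 p)) + var_s * emb (cst (c1 p)) + var_s ^ 2 * emb (rest2 p)"
  by (subst decomp) (simp only: emb_add emb_mult emb_power var_s_emb)

lemma construct:
  assumes "c0 (g C2) = c0 (g C1)" "c0 (g C3) = c0 (g C1)" "c1 (g C1) + c1 (g C2) + c1 (g C3) = 0"
  shows "tr g = Lt (c0 (g C1)) + yy * Lt (c1 (g C1)) + xx * Lt (c1 (g C2))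
     + yy * (xx + yy) * Lg yy (rest2 (g C1)) + xx * (xx + yy) * Lg xx (rest2 (g C2))
     + xx * yy * Lg xx (rest2 (g C3))"
proof (rule ext)
  fix i
  have l3: "c1 (g C3) = c1 (g C1) + c1 (g C2)"
    using assms(3) by (metis add_eq_0_iff bitpoly_neg add.commute)
  have ss: "var_s + var_s = 0" by (rule K_char2)
  show "tr g i = (Lt (c0 (g C1)) + yy * Lt (c1 (g C1)) + xx * Lt (c1 (g C2))
     + yy * (xx + yy) * Lg yy (rest2 (g C1)) + xx * (xx + yy) * Lg xx (rest2 (g C2))
     + xx * yy * Lg xx (rest2 (g C3))) i"
  proof (cases i)
    case C1 then show ?thesis
      by (simp add: xx_apply yy_apply Lt_apply Lg_apply_s emb_decomp[of "g C1"] power2_eq_square algebra_simps)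
  next
    case C2 then show ?thesis using assms
      by (simp add: xx_apply yy_apply Lt_apply Lg_apply_s emb_decomp[of "g C2"] power2_eq_square algebra_simps)
  next
    case C3 then show ?thesis using assms
      by (simp add: xx_apply yy_apply Lt_apply Lg_apply_s emb_decomp[of "g C3"] power2_eq_square l3 cst_add emb_add ss algebra_simps K_two)
  qed
qed


lemma Dc_form: "p \<in> Dc \<Longrightarrow> p = [:coeff p 0:]"
  unfolding Dc_def mem_Collect_eq by (rule sym, rule degree_0_id)

lemma c0_Dc: "p \<in> Dc \<Longrightarrow> c0 p = [:coeff (coeff p 0) 0:]"
  by (subst Dc_form, assumption) (simp add: c0_def)
lemma c1_Dc: "p \<in> Dc \<Longrightarrow> c1 p = [:coeff (coeff p 0) 1:]"
  by (subst Dc_form, assumption) (simp add: c1_def)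
lemma rest2_Dc: "p \<in> Dc \<Longrightarrow> rest2 p = [:poly_shift 2 (coeff p 0):]"
  by (subst Dc_form, assumption) (simp add: rest2_def)
lemma const_Dc: "[:q:] \<in> Dc" by (simp add: Dc_def)
lemma degree_sP: "degree sP = 0" by (simp add: sP_def)
lemma sP_Dc: "sP \<in> Dc" by (simp add: sP_def Dc_def)

lemma okI_0: "okI D {0}" by (simp add: okI_def)
lemma okI_UNIV: "okI D UNIV" by (simp add: okI_def)

lemma bp_sum2: "(1::bit poly) + 1 = 0" by (rule bitpoly_char2)

lemma xx_B: "xx \<in> Bset Dc {0}" "xx \<in> Bset UNIV {0}"
  unfolding xx_tr Bset_mem by (simp_all add: sP_Dc bp_two Dc_def cmp_all degree_sP)
lemma yy_B: "yy \<in> Bset Dc {0}" "yy \<in> Bset UNIV {0}"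
  unfolding yy_tr Bset_mem by (simp_all add: sP_Dc bp_two Dc_def cmp_all degree_sP)
lemma c1_tP: "c1 tP = 0" by (rule poly_eqI) (simp add: coeff_c1 tP_def coeff_pCons split: nat.split)
lemma zz_B: "zz \<in> Bset UNIV {0}"
  unfolding zz_tr Bset_mem by (simp add: c1_tP)

lemma RR_sub: "RR \<subseteq> Bset UNIV {0}"
  unfolding RR_def by (rule ring_gen_Bset[OF okD_UNIV okI_0]) (auto simp: xx_B yy_B zz_B)
lemma AA_sub: "AA \<subseteq> Bset Dc {0}"
  unfolding AA_def by (rule ring_gen_Bset[OF okD_Dc okI_0]) (auto simp: xx_B yy_B)

lemma RR_ring: "a \<in> RR \<Longrightarrow> b \<in> RR \<Longrightarrow> a + b \<in> RR" "a \<in> RR \<Longrightarrow> b \<in> RR \<Longrightarrow> a * b \<in> RR"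
  "1 \<in> RR" "0 \<in> RR" "a \<in> RR \<Longrightarrow> - a \<in> RR" "a \<in> RR \<Longrightarrow> b \<in> RR \<Longrightarrow> a - b \<in> RR"
  unfolding RR_def by (auto intro: ring_gen.intros ring_gen_0 ring_gen_diff)
lemma AA_ring: "a \<in> AA \<Longrightarrow> b \<in> AA \<Longrightarrow> a + b \<in> AA" "a \<in> AA \<Longrightarrow> b \<in> AA \<Longrightarrow> a * b \<in> AA"
  "1 \<in> AA" "0 \<in> AA" "a \<in> AA \<Longrightarrow> - a \<in> AA" "a \<in> AA \<Longrightarrow> b \<in> AA \<Longrightarrow> a - b \<in> AA"
  unfolding AA_def by (auto intro: ring_gen.intros ring_gen_0 ring_gen_diff)

lemma Lt_RR: "Lt a \<in> RR" unfolding RR_def by (rule Lt_in) (simp add: ring_gen.gen)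
lemma Lg_RR: "w \<in> RR \<Longrightarrow> Lg w p \<in> RR" unfolding RR_def by (rule Lg_in) (simp_all add: ring_gen.gen)
lemma Lt_AA: "Lt [:b:] \<in> AA" unfolding Lt_const by (simp add: AA_def kemb_in_ring_gen)
lemma Lg_AA: "w \<in> AA \<Longrightarrow> Lg w [:q:] \<in> AA" unfolding Lg_const AA_def
  by (rule poly_map_in_ring_gen) (auto simp: kemb_in_ring_gen)

lemma Bset_RR: "Bset UNIV {0} \<subseteq> RR"
proof
  fix v assume "v \<in> Bset UNIV {0}"
  then obtain g where v: "v = tr g" and h: "c0 (g C2) = c0 (g C1)" "c0 (g C3) = c0 (g C1)"
    "c1 (g C1) + c1 (g C2) + c1 (g C3) = 0" by (auto simp: Bset_def)
  show "v \<in> RR" unfolding v construct[OF h]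
    by (intro RR_ring Lt_RR Lg_RR xx_RR yy_RR)
qed

lemma Bset_AA: "Bset Dc {0} \<subseteq> AA"
proof
  fix v assume "v \<in> Bset Dc {0}"
  then obtain g where v: "v = tr g" and D: "\<forall>i. g i \<in> Dc" and h: "c0 (g C2) = c0 (g C1)" "c0 (g C3) = c0 (g C1)"
    "c1 (g C1) + c1 (g C2) + c1 (g C3) = 0" by (auto simp: Bset_def)
  have l: "Lt (c0 (g i)) \<in> AA" "Lt (c1 (g i)) \<in> AA" "w \<in> AA \<Longrightarrow> Lg w (rest2 (g i)) \<in> AA" for i w
    using D by (simp_all add: c0_Dc c1_Dc rest2_Dc Lt_AA Lg_AA)
  show "v \<in> AA" unfolding v construct[OF h]
    by (intro AA_ring l xx_AA yy_AA)
qed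

lemma RR_eq: "RR = Bset UNIV {0}" using RR_sub Bset_RR by blast
lemma AA_eq: "AA = Bset Dc {0}" using AA_sub Bset_AA by blast


instantiation bit ::
  "{unique_euclidean_ring, normalization_euclidean_semiring, normalization_semidom_multiplicative}"
begin
definition [simp]: "normalize_bit = (normalize_field :: bit \<Rightarrow> _)"
definition [simp]: "unit_factor_bit = (unit_factor_field :: bit \<Rightarrow> _)"
definition [simp]: "euclidean_size_bit = (euclidean_size_field :: bit \<Rightarrow> _)"
definition [simp]: "division_segment (x :: bit) = 1"
instance
  by standard (auto simp add: dvd_field_iff field_split_simps split: if_splits)
end

instantiation bit :: euclidean_ring_gcd
begin
definition gcd_bit :: "bit \<Rightarrow> bit \<Rightarrow> bit" where  "gcd_bit = Euclidean_Algorithm.gcd"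
definition lcm_bit :: "bit \<Rightarrow> bit \<Rightarrow> bit" where  "lcm_bit = Euclidean_Algorithm.lcm"
definition Gcd_bit :: "bit set \<Rightarrow> bit" where "Gcd_bit = Euclidean_Algorithm.Gcd"
definition Lcm_bit :: "bit set \<Rightarrow> bit" where "Lcm_bit = Euclidean_Algorithm.Lcm"
instance by standard (simp_all add: gcd_bit_def lcm_bit_def Gcd_bit_def Lcm_bit_def)
end

instance bit :: field_gcd ..

lemma Fract_power: "Fract a b ^ n = Fract (a ^ n) (b ^ n)"
  by (induct n) (simp_all add: One_fract_def)

lemma normal_P:
  fixes q :: K and d :: "nat \<Rightarrow> P"
  assumes eq: "q ^ n + (\<Sum>i<n. emb (d i) * q ^ i) = 0"
  shows "\<exists>p. q = emb p"
proof -
  obtain a b where ab: "quot_of_fract q = (a, b)" by (cases "quot_of_fract q")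
  have nf: "(a, b) \<in> normalized_fracts" using quot_of_fract_in_normalized_fracts[of q] ab by simp
  then have cop: "coprime a b" and ub: "unit_factor b = 1" by (auto simp: normalized_fracts_def)
  have b0: "b \<noteq> 0" using nf by (auto)
  have q: "q = Fract a b" using quot_to_fract_quot_of_fract[of q] ab by (simp add: quot_to_fract_def)
  have "Fract (b ^ n) 1 * (q ^ n + (\<Sum>i<n. emb (d i) * q ^ i)) = 0" using eq by simp
  moreover have "Fract (b ^ n) 1 * (q ^ n + (\<Sum>i<n. emb (d i) * q ^ i))
      = emb (a ^ n + (\<Sum>i<n. d i * a ^ i * b ^ (n - i)))"
  proof -
    have t: "Fract (b ^ n) 1 * (emb (d i) * q ^ i) = emb (d i * a ^ i * b ^ (n - i))" if "i < n" for i
    proof -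
      have "b ^ n = b ^ i * b ^ (n - i)" using that by (simp add: power_add[symmetric])
      then show ?thesis using b0
        by (simp add: q Fract_power emb_def eq_fract mult.assoc mult.left_commute)
    qed
    have t0: "Fract (b ^ n) 1 * q ^ n = emb (a ^ n)" using b0
      by (simp add: q Fract_power emb_def eq_fract mult.commute)
    have "(\<Sum>i<n. Fract (b ^ n) 1 * (emb (d i) * q ^ i)) = (\<Sum>i<n. emb (d i * a ^ i * b ^ (n - i)))"
      by (rule sum.cong) (auto simp: t)
    then show ?thesis
      by (simp add: distrib_left sum_distrib_left t0 emb_add hom_sum[OF emb_hom])
  qed
  ultimately have e: "a ^ n + (\<Sum>i<n. d i * a ^ i * b ^ (n - i)) = 0" by (simp add: emb_eq_0)
  have "b dvd (\<Sum>i<n. d i * a ^ i * b ^ (n - i))"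
  proof (rule dvd_sum)
    fix i assume "i \<in> {..<n}"
    then have "b ^ (n - i) = b * b ^ (n - i - 1)" by (cases "n - i") auto
    then show "b dvd d i * a ^ i * b ^ (n - i)" by simp
  qed
  then have "b dvd a ^ n" using e by (metis add_eq_0_iff dvd_minus_iff)
  moreover have "coprime (a ^ n) b" using cop by simp
  ultimately have "is_unit b" using coprime_common_divisor[of "a ^ n" b b] by simp
  then have "b = 1" using ub by (metis is_unit_normalize unit_factor_1_imp_normalized)
  then show ?thesis using q by (auto simp: emb_def)
qed

lemma normal_Dc:
  fixes p :: P and d :: "nat \<Rightarrow> P"
  assumes eq: "p ^ n + (\<Sum>i<n. d i * p ^ i) = 0" and D: "\<forall>i<n. d i \<in> Dc"
  shows "p \<in> Dc"
proof (rule ccontr)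
  assume "p \<notin> Dc"
  then have m: "degree p > 0" by (simp add: Dc_def)
  then have p0: "p \<noteq> 0" by auto
  have n: "n > 0" using eq by (cases n) auto
  define N where "N = n * degree p"
  have c1: "coeff (p ^ n) N = lead_coeff p ^ n"
    using p0 by (simp add: N_def degree_power_eq lead_coeff_power[symmetric])
  have c2: "coeff (d i * p ^ i) N = 0" if "i < n" for i
  proof (rule coeff_eq_0)
    have "degree (d i * p ^ i) \<le> degree (d i) + degree (p ^ i)" by (rule degree_mult_le)
    also have "\<dots> \<le> i * degree p" using D that degree_power_le[of p i] by (simp add: Dc_def mult.commute)
    also have "\<dots> < N" using that m by (simp add: N_def)
    finally show "degree (d i * p ^ i) < N" .
  qed
  have "coeff (p ^ n + (\<Sum>i<n. d i * p ^ i)) N = lead_coeff p ^ n"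
    by (simp add: coeff_sum c1 c2)
  then show False using eq p0 by simp
qed


definition sr :: "T set \<Rightarrow> bool" where
  "sr B \<longleftrightarrow> 0 \<in> B \<and> 1 \<in> B \<and> (\<forall>a\<in>B. \<forall>b\<in>B. a + b \<in> B \<and> a * b \<in> B \<and> - a \<in> B)"

definition goodD :: "P set \<Rightarrow> bool" where "goodD D \<longleftrightarrow> D = UNIV \<or> D = Dc"

lemma goodD_ok: "goodD D \<Longrightarrow> okD D" by (auto simp: goodD_def okD_UNIV okD_Dc)
lemma goodD_cst: "goodD D \<Longrightarrow> p \<in> D \<Longrightarrow> cst (c0 p) \<in> D"
  by (auto simp: goodD_def c0_Dc cst_def const_Dc)
lemma goodD_sP2: "goodD D \<Longrightarrow> sP ^ 2 \<in> D"
  by (auto simp: goodD_def Dc_def sP_def power2_eq_square)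
lemma goodD_mult: "goodD D \<Longrightarrow> a \<in> D \<Longrightarrow> b \<in> D \<Longrightarrow> a * b \<in> D"
  using goodD_ok by (auto simp: okD_def)

lemma c0_sP2[simp]: "c0 (sP ^ 2) = 0" by (simp add: power2_eq_square c0_mult)
lemma c1_sP2[simp]: "c1 (sP ^ 2) = 0" by (simp add: power2_eq_square c1_mult)

lemma lift_B0:
  assumes "goodD D" "p \<in> D"
  shows "\<exists>w\<in>Bset D {0}. w i = emb p"
proof -
  define i' where "i' = (if i = C1 then C2 else C1)"
  have ii: "i' \<noteq> i" by (simp add: i'_def)
  define g where "g = (\<lambda>j. if j = i' then cst (c0 p) else p)"
  have "tr g \<in> Bset D {0}"
    unfolding Bset_mem using assms goodD_cst[OF assms]
    by (cases i; auto simp: g_def i'_def bitpoly_char2)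
  moreover have "tr g i = emb p" using ii by (simp add: g_def)
  ultimately show ?thesis by blast
qed

lemma e_B0: "goodD D \<Longrightarrow> tr (\<lambda>j. if j = i then sP ^ 2 else 0) \<in> Bset D {0}"
  unfolding Bset_mem using goodD_sP2[of D] goodD_ok[of D]
  by (cases i) (auto simp: okD_def)

lemma sigma_B0: "goodD D \<Longrightarrow> tr (\<lambda>j. sP ^ 2) \<in> Bset D {0}"
  unfolding Bset_mem using goodD_sP2[of D] by simp

lemma nzd_sub:
  assumes "goodD D" "Bset D {0} \<subseteq> B" "a \<in> nzd B"
  shows "a \<in> B \<and> (\<forall>i. a i \<noteq> 0)"
proof -
  have "a i \<noteq> 0" for i
  proof
    assume ai: "a i = 0"
    let ?e = "tr (\<lambda>j. if j = i then sP ^ 2 else 0)"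
    have "?e \<in> B" using e_B0[OF assms(1)] assms(2) by blast
    moreover have "a * ?e = 0" by (rule ext) (auto simp: ai)
    moreover have "?e \<noteq> 0"
    proof
      assume "?e = 0"
      then have "?e i = 0" by simp
      then show False by (simp add: emb_eq_0 sP_def)
    qed
    ultimately show False using assms(3) by (auto simp: nzd_def)
  qed
  then show ?thesis using assms(3) by (auto simp: nzd_def)
qed

lemma nzd_sup:
  fixes a :: T
  assumes "a \<in> B" "\<forall>i. a i \<noteq> 0"
  shows "a \<in> nzd B"
proof -
  have "b = 0" if "a * b = 0" for b :: T
  proof -
    have "b i = 0" for i
    proof -
      have "a i * b i = 0" using that by (metis times_fun_apply zero_fun_apply)
      then show "b i = 0" using assms by simp
    qed
    then show ?thesis by (simp add: fun_eq_iff)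
  qed
  then show ?thesis using assms by (auto simp: nzd_def)
qed

lemma nzd_eq:
  assumes "goodD D" "Bset D {0} \<subseteq> B"
  shows "nzd B = {b \<in> B. \<forall>i. b i \<noteq> 0}"
  using nzd_sub[OF assms] nzd_sup by blast

lemma eval_pow: "(q ^ n :: T) j = q j ^ n" by (rule hom_power[OF eval_hom])
lemma eval_sum: "(sum f A :: T) j = (\<Sum>x\<in>A. f x j)" by (rule hom_sum[OF eval_hom])

lemma Full_elem: "v \<in> Full D \<Longrightarrow> \<exists>p\<in>D. v j = emb p"
  by (auto simp: Full_def)

lemma intcl_sub:
  assumes "goodD D" "B \<subseteq> Full D"
  shows "int_closure B \<subseteq> Full D"
proof
  fix q assume "q \<in> int_closure B"
  then obtain n cs where cs: "\<forall>i<n. cs i \<in> B" and eq: "q ^ n + (\<Sum>i<n. cs i * q ^ i) = 0"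
    by (auto simp: int_closure_def)
  have "\<exists>p\<in>D. q j = emb p" for j
  proof -
    have "\<forall>i<n. \<exists>p\<in>D. cs i j = emb p" using cs assms(2) Full_elem by blast
    then obtain d where d: "\<forall>i<n. d i \<in> D \<and> cs i j = emb (d i)" by metis
    have eqj: "q j ^ n + (\<Sum>i<n. emb (d i) * q j ^ i) = 0"
    proof -
      have "(q ^ n + (\<Sum>i<n. cs i * q ^ i)) j = 0" using eq by simp
      then show ?thesis using d by (simp add: eval_pow eval_sum)
    qed
    obtain p where p: "q j = emb p" using normal_P[OF eqj] by blast
    have "p \<in> D"
    proof (cases "D = UNIV")
      case False
      then have DD: "D = Dc" using assms(1) by (simp add: goodD_def)
      have "emb (p ^ n + (\<Sum>i<n. d i * p ^ i)) = 0"
        using eqj p by (simp add: emb_add emb_power emb_mult hom_sum[OF emb_hom])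
      then have "p ^ n + (\<Sum>i<n. d i * p ^ i) = 0" by (simp add: emb_eq_0)
      then show ?thesis using normal_Dc[of p n d] d DD by auto
    qed simp
    then show ?thesis using p by blast
  qed
  then obtain g where "\<forall>j. g j \<in> D \<and> q j = emb (g j)" by metis
  then have "q = tr g" "\<forall>j. g j \<in> D" by (auto simp: fun_eq_iff)
  then show "q \<in> Full D" by (simp add: Full_mem)
qed

lemma intcl_sup:
  assumes "goodD D" "Bset D {0} \<subseteq> B" "sr B"
  shows "Full D \<subseteq> int_closure B"
proof
  fix v assume "v \<in> Full D"
  then obtain g where v: "v = tr g" and g: "\<forall>i. g i \<in> D" by (auto simp: Full_def)
  let ?s = "tr (\<lambda>j. sP ^ 2)"
  have s: "?s \<in> nzd B"
    using sigma_B0[OF assms(1)] assms(2) nzd_eq[OF assms(1,2)] by (auto simp: sP_def emb_eq_0)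
  have "?s * v \<in> Bset D {0}"
    unfolding v tr_mult Bset_mem using g goodD_mult[OF assms(1) goodD_sP2[OF assms(1)]]
    by (simp add: c0_mult c1_mult)
  then have tq: "v \<in> tot_quot B" using s assms(2) by (auto simp: tot_quot_def)
  obtain w1 where w1: "w1 \<in> B" "w1 C1 = emb (g C1)" using lift_B0[OF assms(1)] g assms(2) by blast
  obtain w2 where w2: "w2 \<in> B" "w2 C2 = emb (g C2)" using lift_B0[OF assms(1)] g assms(2) by blast
  obtain w3 where w3: "w3 \<in> B" "w3 C3 = emb (g C3)" using lift_B0[OF assms(1)] g assms(2) by blast
  define cs where "cs = (\<lambda>i::nat. [- (w1 * w2 * w3), w1 * w2 + w1 * w3 + w2 * w3, - (w1 + w2 + w3)] ! i)"
  have sra: "a + b \<in> B" "a * b \<in> B" "- a \<in> B" if "a \<in> B" "b \<in> B" for a b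
    using assms(3) that unfolding sr_def by blast+
  have ce: "cs 0 = - (w1 * w2 * w3)" "cs 1 = w1 * w2 + w1 * w3 + w2 * w3" "cs 2 = - (w1 + w2 + w3)"
    by (simp_all add: cs_def numeral_2_eq_2)
  have "- (w1 * w2 * w3) \<in> B" "w1 * w2 + w1 * w3 + w2 * w3 \<in> B" "- (w1 + w2 + w3) \<in> B"
    by (meson sra w1(1) w2(1) w3(1))+
  then have "cs 0 \<in> B" "cs 1 \<in> B" "cs 2 \<in> B" unfolding ce .
  then have csB: "\<forall>i<3. cs i \<in> B" by (auto simp: numeral_3_eq_3 less_Suc_eq numeral_2_eq_2)
  have "v ^ 3 + (\<Sum>i<3. cs i * v ^ i) = (v - w1) * (v - w2) * (v - w3)"
    by (simp add: cs_def numeral_3_eq_3 lessThan_Suc algebra_simps power2_eq_square power3_eq_cube)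
  also have "\<dots> = 0"
  proof (rule ext)
    fix i show "((v - w1) * (v - w2) * (v - w3)) i = 0 i"
      using w1 w2 w3 by (cases i) (simp_all add: v)
  qed
  finally show "v \<in> int_closure B" using tq csB unfolding int_closure_def by blast
qed

lemma intcl_eq:
  assumes "goodD D" "Bset D {0} \<subseteq> B" "B \<subseteq> Full D" "sr B"
  shows "int_closure B = Full D"
  using intcl_sub[OF assms(1,3)] intcl_sup[OF assms(1,2,4)] by blast


definition Phi :: "('a \<times> 'a \<Rightarrow> 'b::comm_ring_1) \<Rightarrow> ('a \<times> 'a \<Rightarrow>\<^sub>0 int) \<Rightarrow> 'b" where
  "Phi \<beta> f = (\<Sum>k\<in>Poly_Mapping.keys f. of_int (Poly_Mapping.lookup f k) * \<beta> k)"

lemma Phi_alt: "finite A \<Longrightarrow> Poly_Mapping.keys f \<subseteq> A \<Longrightarrow> Phi \<beta> f = (\<Sum>k\<in>A. of_int (Poly_Mapping.lookup f k) * \<beta> k)"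
  unfolding Phi_def by (rule sum.mono_neutral_left) (auto simp: in_keys_iff)

lemma Phi_add: "Phi \<beta> (f + g) = Phi \<beta> f + Phi \<beta> g"
proof -
  let ?A = "Poly_Mapping.keys f \<union> Poly_Mapping.keys g"
  have "Phi \<beta> (f + g) = (\<Sum>k\<in>?A. of_int (Poly_Mapping.lookup (f + g) k) * \<beta> k)"
    by (rule Phi_alt) (use keys_add[of f g] in auto)
  also have "\<dots> = (\<Sum>k\<in>?A. of_int (Poly_Mapping.lookup f k) * \<beta> k) + (\<Sum>k\<in>?A. of_int (Poly_Mapping.lookup g k) * \<beta> k)"
    by (simp add: lookup_add distrib_right sum.distrib)
  also have "\<dots> = Phi \<beta> f + Phi \<beta> g"
    by (subst (1 2) Phi_alt[of ?A]) auto
  finally show ?thesis .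
qed

lemma Phi_uminus: "Phi \<beta> (- f) = - Phi \<beta> f"
  by (simp add: Phi_def sum_negf)

lemma Phi_diff: "Phi \<beta> (f - g) = Phi \<beta> f - Phi \<beta> g"
  using Phi_add[of \<beta> f "- g"] Phi_uminus[of \<beta> g] by simp

lemma Phi_single: "Phi \<beta> (Poly_Mapping.single k 1) = \<beta> k"
  by (simp add: Phi_def)

lemma Phi_rel:
  assumes "u \<in> tensor_rel B C"
    and addl: "\<And>c c' d. c \<in> C \<Longrightarrow> c' \<in> C \<Longrightarrow> d \<in> C \<Longrightarrow> \<beta> (c + c', d) = \<beta> (c, d) + \<beta> (c', d)"
    and addr: "\<And>c d d'. c \<in> C \<Longrightarrow> d \<in> C \<Longrightarrow> d' \<in> C \<Longrightarrow> \<beta> (c, d + d') = \<beta> (c, d) + \<beta> (c, d')"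
    and bal: "\<And>c d b. c \<in> C \<Longrightarrow> d \<in> C \<Longrightarrow> b \<in> B \<Longrightarrow> \<beta> (c * b, d) = \<beta> (c, b * d)"
  shows "Phi \<beta> u = 0"
  using assms(1)
proof induct
  case zero then show ?case by (simp add: Phi_def)
next
  case (addl c c' d) then show ?case using assms(2) by (simp add: Phi_diff Phi_single)
next
  case (addr c d d') then show ?case using assms(3) by (simp add: Phi_diff Phi_single)
next
  case (bal c d b) then show ?case using assms(4) by (simp add: Phi_diff Phi_single)
next
  case (plus u v) then show ?case by (simp add: Phi_add)
next
  case (uminus u) then show ?case by (simp add: Phi_uminus)
qed

abbreviation sg :: "'a \<Rightarrow> 'a \<Rightarrow> ('a \<times> 'a \<Rightarrow>\<^sub>0 int)" where "sg c d \<equiv> Poly_Mapping.single (c, d) 1"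

definition E :: "K \<Rightarrow> bit poly" where "E q = c0 (THE p. q = emb p)"
lemma E_emb[simp]: "E (emb p) = c0 p" by (simp add: E_def emb_inj)
lemma E_1[simp]: "E 1 = 1" using E_emb[of 1] by simp

definition bet :: "cmp \<Rightarrow> cmp \<Rightarrow> T \<times> T \<Rightarrow> bit poly" where
  "bet i j = (\<lambda>(u, v). E (u i) * E (v j))"

lemma strict_sub:
  assumes "B \<subseteq> Bset D UNIV"
  shows "strict_closure B (Full D) \<subseteq> Bset D UNIV"
proof
  fix \<alpha> assume a: "\<alpha> \<in> strict_closure B (Full D)"
  then have aF: "\<alpha> \<in> Full D" and rel: "sg \<alpha> 1 - sg 1 \<alpha> \<in> tensor_rel B (Full D)"
    by (auto simp: strict_closure_def)
  obtain g where ag: "\<alpha> = tr g" and gD: "\<forall>i. g i \<in> D" using aF by (auto simp: Full_def)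
  have eq: "c0 (g i) = c0 (g j)" for i j
  proof -
    have "Phi (bet i j) (sg \<alpha> 1 - sg 1 \<alpha>) = 0"
    proof (rule Phi_rel[OF rel])
      fix c c' d assume "c \<in> Full D" "c' \<in> Full D" "d \<in> Full D"
      then obtain gc gc' gd where "c = tr gc" "c' = tr gc'" "d = tr gd" by (auto simp: Full_def)
      then show "bet i j (c + c', d) = bet i j (c, d) + bet i j (c', d)"
        by (simp add: bet_def tr_add c0_add algebra_simps)
    next
      fix c d d' assume "c \<in> Full D" "d \<in> Full D" "d' \<in> Full D"
      then obtain gc gd gd' where "c = tr gc" "d' = tr gd'" "d = tr gd" by (auto simp: Full_def)
      then show "bet i j (c, d + d') = bet i j (c, d) + bet i j (c, d')"
        by (simp add: bet_def tr_add c0_add algebra_simps)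
    next
      fix c d b assume "c \<in> Full D" "d \<in> Full D" "b \<in> B"
      then obtain gc gd gb where "c = tr gc" "d = tr gd" "b = tr gb"
        and hb: "c0 (gb C2) = c0 (gb C1)" "c0 (gb C3) = c0 (gb C1)"
        using assms by (auto simp: Full_def Bset_def)
      moreover have "c0 (gb i) = c0 (gb j)" using hb by (cases i; cases j) auto
      ultimately show "bet i j (c * b, d) = bet i j (c, b * d)"
        by (simp add: bet_def tr_mult c0_mult algebra_simps)
    qed
    then show ?thesis by (simp add: Phi_diff Phi_single bet_def ag)
  qed
  show "\<alpha> \<in> Bset D UNIV" unfolding ag Bset_mem using gD eq by auto
qed


definition teq where "teq B C f g \<longleftrightarrow> f - g \<in> tensor_rel B C"

lemma rel_diff: "u \<in> tensor_rel B C \<Longrightarrow> v \<in> tensor_rel B C \<Longrightarrow> u - v \<in> tensor_rel B C"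
  unfolding diff_conv_add_uminus by (rule tensor_rel.plus[OF _ tensor_rel.uminus])

lemma teq_refl: "teq B C f f" by (simp add: teq_def tensor_rel.zero)
lemma teq_sym: "teq B C f g \<Longrightarrow> teq B C g f"
proof -
  assume "teq B C f g"
  then have "- (f - g) \<in> tensor_rel B C" unfolding teq_def by (rule tensor_rel.uminus)
  moreover have "- (f - g) = g - f" by simp
  ultimately show ?thesis by (simp add: teq_def)
qed
lemma teq_trans: "teq B C f g \<Longrightarrow> teq B C g h \<Longrightarrow> teq B C f h"
proof -
  assume "teq B C f g" "teq B C g h"
  then have "(f - g) + (g - h) \<in> tensor_rel B C" unfolding teq_def by (rule tensor_rel.plus)
  moreover have "(f - g) + (g - h) = f - h" by simp
  ultimately show ?thesis by (simp add: teq_def)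
qed
lemma teq_eqL: "f = f' \<Longrightarrow> teq B C f' g \<Longrightarrow> teq B C f g" by simp
lemma teq_eqR: "g = g' \<Longrightarrow> teq B C f g' \<Longrightarrow> teq B C f g" by simp
lemma teq_add: "teq B C f f' \<Longrightarrow> teq B C g g' \<Longrightarrow> teq B C (f + g) (f' + g')"
proof -
  assume "teq B C f f'" "teq B C g g'"
  then have "(f - f') + (g - g') \<in> tensor_rel B C" unfolding teq_def by (rule tensor_rel.plus)
  moreover have "(f - f') + (g - g') = (f + g) - (f' + g')" by (simp add: algebra_simps)
  ultimately show ?thesis by (simp add: teq_def)
qed

lemma teq_L: "c \<in> C \<Longrightarrow> c' \<in> C \<Longrightarrow> d \<in> C \<Longrightarrow> teq B C (sg (c + c') d) (sg c d + sg c' d)"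
  unfolding teq_def using tensor_rel.addl[of c C c' d B] by (simp add: diff_diff_eq)
lemma teq_R: "c \<in> C \<Longrightarrow> d \<in> C \<Longrightarrow> d' \<in> C \<Longrightarrow> teq B C (sg c (d + d')) (sg c d + sg c d')"
  unfolding teq_def using tensor_rel.addr[of c C d d' B] by (simp add: diff_diff_eq)
lemma teq_bal: "c \<in> C \<Longrightarrow> d \<in> C \<Longrightarrow> b \<in> B \<Longrightarrow> teq B C (sg (c * b) d) (sg c (b * d))"
  unfolding teq_def using tensor_rel.bal[of c C d b B] by simp
lemma teq_z: "c \<in> C \<Longrightarrow> 0 \<in> C \<Longrightarrow> teq B C (sg c 0) 0"
proof -
  assume "c \<in> C" "0 \<in> C"
  then have "sg c 0 - sg c 0 - sg c 0 \<in> tensor_rel B C" using tensor_rel.addr[of c C 0 0 B] by simp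
  then have "- (sg c 0 - sg c 0 - sg c 0) \<in> tensor_rel B C" by (rule tensor_rel.uminus)
  then show ?thesis by (simp add: teq_def)
qed
lemma teq_z': "c \<in> C \<Longrightarrow> 0 \<in> C \<Longrightarrow> teq B C (sg 0 c) 0"
proof -
  assume "c \<in> C" "0 \<in> C"
  then have "sg 0 c - sg 0 c - sg 0 c \<in> tensor_rel B C" using tensor_rel.addl[of 0 C 0 c B] by simp
  then have "- (sg 0 c - sg 0 c - sg 0 c) \<in> tensor_rel B C" by (rule tensor_rel.uminus)
  then show ?thesis by (simp add: teq_def)
qed

lemma rho_like:
  fixes B C :: "'a::comm_ring_1 set"
  assumes srC: "\<And>a b. a \<in> C \<Longrightarrow> b \<in> C \<Longrightarrow> a + b \<in> C \<and> a * b \<in> C" "0 \<in> C" "1 \<in> C"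
    and BC: "B \<subseteq> C" and yB: "y \<in> B" and wB: "w \<in> B" and pB: "p \<in> B"
    and e: "ea \<in> C" "eb \<in> C" "ec \<in> C" "ea + eb + ec = 1"
    and r: "r = ea * y" "r = ea * w" "eb * y = 0" "ec * w = 0"
  shows "teq B C (sg (p * r) 1) (sg 1 (p * r))"
proof -
  have yC: "y \<in> C" and wC: "w \<in> C" and pC: "p \<in> C" using BC yB wB pB by auto
  have rC: "r \<in> C" using r srC e yC by auto
  have C: "ea * p \<in> C" "eb * p \<in> C" "ec * p \<in> C" "ea * p + eb * p \<in> C" "p * r \<in> C"
    using srC e pC rC by auto
  have pe: "p = ea * p + eb * p + ec * p" using e(4) by (simp add: distrib_right[symmetric])
  have A: "teq B C (sg (p * r) 1) (sg ea (p * r))"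
  proof -
    have 1: "teq B C (sg (p * r) 1) (sg r p)"
      using teq_bal[OF rC srC(3) pB] by (simp add: mult.commute)
    have 2: "teq B C (sg r p) (sg r (ea * p) + sg r (eb * p) + sg r (ec * p))"
    proof -
      have a1: "teq B C (sg r (ea * p + eb * p + ec * p)) (sg r (ea * p + eb * p) + sg r (ec * p))"
        by (rule teq_R) (use rC C in auto)
      have a2: "teq B C (sg r (ea * p + eb * p)) (sg r (ea * p) + sg r (eb * p))"
        by (rule teq_R) (use rC C in auto)
      have a3: "teq B C (sg r (ea * p + eb * p) + sg r (ec * p)) (sg r (ea * p) + sg r (eb * p) + sg r (ec * p))"
        by (rule teq_add[OF a2 teq_refl])
      have "sg r p = sg r (ea * p + eb * p + ec * p)" using pe by (rule arg_cong)
      then show ?thesis by (rule teq_eqL) (rule teq_trans[OF a1 a3])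
    qed
    have 3: "teq B C (sg r (eb * p)) 0"
    proof -
      have h1: "teq B C (sg (ea * y) (eb * p)) (sg ea (y * (eb * p)))" by (rule teq_bal) (use e C yB in auto)
      have h2: "y * (eb * p) = 0"
      proof - have "y * (eb * p) = (eb * y) * p" by (simp add: ac_simps) then show ?thesis using r(3) by simp qed
      show ?thesis using teq_trans[OF h1[unfolded h2] teq_z[OF e(1) srC(2)]] r(1) by simp
    qed
    have 4: "teq B C (sg r (ec * p)) 0"
    proof -
      have h1: "teq B C (sg (ea * w) (ec * p)) (sg ea (w * (ec * p)))" by (rule teq_bal) (use e C wB in auto)
      have h2: "w * (ec * p) = 0"
      proof - have "w * (ec * p) = (ec * w) * p" by (simp add: ac_simps) then show ?thesis using r(4) by simp qed
      show ?thesis using teq_trans[OF h1[unfolded h2] teq_z[OF e(1) srC(2)]] r(2) by simp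
    qed
    have 5: "teq B C (sg r (ea * p)) (sg ea (p * r))"
    proof -
      have "teq B C (sg (ea * y) (ea * p)) (sg ea (y * (ea * p)))" by (rule teq_bal) (use e C yB in auto)
      moreover have "y * (ea * p) = p * r" using r by (simp add: algebra_simps)
      ultimately show ?thesis using r by simp
    qed
    have fin: "teq B C (sg r (ea * p) + sg r (eb * p) + sg r (ec * p)) (sg ea (p * r) + 0 + 0)"
      by (intro teq_add 3 4 5)
    show ?thesis using teq_trans[OF 1 teq_trans[OF 2 fin]] by simp
  qed
  have B': "teq B C (sg 1 (p * r)) (sg ea (p * r))"
  proof -
    have 1: "teq B C (sg 1 (p * r)) (sg p r)"
      using teq_sym[OF teq_bal[OF srC(3) rC pB]] by simp
    have 2: "teq B C (sg p r) (sg (ea * p) r + sg (eb * p) r + sg (ec * p) r)"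
    proof -
      have a1: "teq B C (sg (ea * p + eb * p + ec * p) r) (sg (ea * p + eb * p) r + sg (ec * p) r)"
        by (rule teq_L) (use rC C in auto)
      have a2: "teq B C (sg (ea * p + eb * p) r) (sg (ea * p) r + sg (eb * p) r)"
        by (rule teq_L) (use rC C in auto)
      have a3: "teq B C (sg (ea * p + eb * p) r + sg (ec * p) r) (sg (ea * p) r + sg (eb * p) r + sg (ec * p) r)"
        by (rule teq_add[OF a2 teq_refl])
      have "sg p r = sg (ea * p + eb * p + ec * p) r" using pe by (rule arg_cong)
      then show ?thesis by (rule teq_eqL) (rule teq_trans[OF a1 a3])
    qed
    have 3: "teq B C (sg (eb * p) r) 0"
    proof -
      have h1: "teq B C (sg (eb * p * y) ea) (sg (eb * p) (y * ea))" by (rule teq_bal) (use e C yB in auto)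
      have h2: "eb * p * y = 0"
      proof - have "eb * p * y = (eb * y) * p" by (simp add: ac_simps) then show ?thesis using r(3) by simp qed
      have h3: "y * ea = r" using r by (simp add: mult.commute)
      show ?thesis using teq_trans[OF teq_sym[OF h1[unfolded h2 h3]] teq_z'[OF e(1) srC(2)]] .
    qed
    have 4: "teq B C (sg (ec * p) r) 0"
    proof -
      have h1: "teq B C (sg (ec * p * w) ea) (sg (ec * p) (w * ea))" by (rule teq_bal) (use e C wB in auto)
      have h2: "ec * p * w = 0"
      proof - have "ec * p * w = (ec * w) * p" by (simp add: ac_simps) then show ?thesis using r(4) by simp qed
      have h3: "w * ea = r" using r by (simp add: mult.commute)
      show ?thesis using teq_trans[OF teq_sym[OF h1[unfolded h2 h3]] teq_z'[OF e(1) srC(2)]] .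
    qed
    have 5: "teq B C (sg (ea * p) r) (sg ea (p * r))" by (rule teq_bal) (use e rC pB in auto)
    have fin: "teq B C (sg (ea * p) r + sg (eb * p) r + sg (ec * p) r) (sg ea (p * r) + 0 + 0)"
      by (intro teq_add 3 4 5)
    show ?thesis using teq_trans[OF 1 teq_trans[OF 2 fin]] by simp
  qed
  show ?thesis using teq_trans[OF A teq_sym[OF B']] .
qed

lemma strict_in_B:
  assumes "b \<in> B" "B \<subseteq> C" "1 \<in> C"
  shows "b \<in> strict_closure B C"
proof -
  have "teq B C (sg (1 * b) 1) (sg 1 (b * 1))" by (rule teq_bal) (use assms in auto)
  moreover have "b \<in> C" using assms by blast
  ultimately show ?thesis by (simp add: strict_closure_def teq_def)
qed

lemma strict_add:
  assumes "a \<in> strict_closure B C" "b \<in> strict_closure B C" "\<And>a b. a \<in> C \<Longrightarrow> b \<in> C \<Longrightarrow> a + b \<in> C" "1 \<in> C"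
  shows "a + b \<in> strict_closure B C"
proof -
  have aC: "a \<in> C" and bC: "b \<in> C" and ta: "teq B C (sg a 1) (sg 1 a)" and tb: "teq B C (sg b 1) (sg 1 b)"
    using assms by (auto simp: strict_closure_def teq_def)
  have "teq B C (sg (a + b) 1) (sg a 1 + sg b 1)" by (rule teq_L) (use aC bC assms in auto)
  moreover have "teq B C (sg 1 (a + b)) (sg 1 a + sg 1 b)" by (rule teq_R) (use aC bC assms in auto)
  ultimately have "teq B C (sg (a + b) 1) (sg 1 (a + b))"
    using teq_trans[OF _ teq_trans[OF teq_add[OF ta tb] teq_sym]] by blast
  then show ?thesis using aC bC assms by (auto simp: strict_closure_def teq_def)
qed


definition ee :: "cmp \<Rightarrow> T" where "ee i = tr (\<lambda>j. if j = i then 1 else 0)"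

lemma Full_ring: assumes "goodD D" shows
  "a \<in> Full D \<Longrightarrow> b \<in> Full D \<Longrightarrow> a + b \<in> Full D \<and> a * b \<in> Full D" "0 \<in> Full D" "1 \<in> Full D"
proof -
  have ok: "okD D" by (rule goodD_ok[OF assms])
  show "a \<in> Full D \<Longrightarrow> b \<in> Full D \<Longrightarrow> a + b \<in> Full D \<and> a * b \<in> Full D"
  proof -
    assume "a \<in> Full D" "b \<in> Full D"
    then obtain g h where "a = tr g" "b = tr h" "\<forall>i. g i \<in> D" "\<forall>i. h i \<in> D" by (auto simp: Full_def)
    then show ?thesis using ok by (simp add: tr_add tr_mult Full_mem okD_def)
  qed
  show "0 \<in> Full D" unfolding tr_0 Full_mem using ok by (simp add: okD_def)
  show "1 \<in> Full D" unfolding tr_1 Full_mem using ok by (simp add: okD_def)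
qed

lemma ee_Full: "goodD D \<Longrightarrow> ee i \<in> Full D"
  using goodD_ok[of D] unfolding ee_def Full_mem by (auto simp: okD_def)

lemma ee_sum: "ee C1 + ee C2 + ee C3 = 1"
  by (rule ext) (case_tac x; simp add: ee_def)

lemma xxyy_tr: "xx + yy = tr (\<lambda>i. case i of C1 \<Rightarrow> sP | C2 \<Rightarrow> sP | C3 \<Rightarrow> 0)"
  unfolding xx_tr yy_tr tr_add by (rule arg_cong[where f=tr]) (auto simp: P_char2' split: cmp.split)

lemma rho_eqs: "rho = ee C1 * yy" "rho = ee C1 * (xx + yy)" "ee C2 * yy = 0" "ee C3 * (xx + yy) = 0"
proof -
  show "rho = ee C1 * yy" "ee C2 * yy = 0"
    unfolding rho_tr ee_def yy_tr tr_mult tr_0 by (auto intro!: arg_cong[where f=tr] split: cmp.split)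
  show "rho = ee C1 * (xx + yy)" "ee C3 * (xx + yy) = 0"
    unfolding xxyy_tr unfolding rho_tr ee_def tr_mult tr_0 by (auto intro!: arg_cong[where f=tr] split: cmp.split)
qed

lemma B0_ring: "goodD D \<Longrightarrow> a \<in> Bset D {0} \<Longrightarrow> b \<in> Bset D {0} \<Longrightarrow> a + b \<in> Bset D {0} \<and> a * b \<in> Bset D {0}"
  using Bset_add Bset_mult goodD_ok okI_0 by blast

lemma yy_B0: "goodD D \<Longrightarrow> yy \<in> Bset D {0}" using yy_B by (auto simp: goodD_def)
lemma xx_B0: "goodD D \<Longrightarrow> xx \<in> Bset D {0}" using xx_B by (auto simp: goodD_def)

lemma rho_strict:
  assumes "goodD D" "p \<in> Bset D {0}"
  shows "p * rho \<in> strict_closure (Bset D {0}) (Full D)"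
proof -
  have "teq (Bset D {0}) (Full D) (sg (p * rho) 1) (sg 1 (p * rho))"
    by (rule rho_like[where ea="ee C1" and eb="ee C2" and ec="ee C3" and y=yy and w="xx+yy"])
      (use Full_ring[OF assms(1)] Bset_Full ee_Full[OF assms(1)] assms yy_B0[OF assms(1)] xx_B0[OF assms(1)]
        B0_ring[OF assms(1)] ee_sum rho_eqs in auto)
  moreover have "p * rho \<in> Full D"
  proof -
    have "rho \<in> Full D" unfolding rho_tr Full_mem using goodD_ok[OF assms(1)] sP_Dc
      by (auto simp: okD_def goodD_def assms(1) split: cmp.split) (use assms(1) goodD_def in auto)
    then show ?thesis using assms Bset_Full Full_ring[OF assms(1)] by blast
  qed
  ultimately show ?thesis by (simp add: strict_closure_def teq_def)
qed

lemma Lt_rho: "Lt a * rho = tr (\<lambda>i. case i of C1 \<Rightarrow> sP * cst a | C2 \<Rightarrow> 0 | C3 \<Rightarrow> 0)"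
  unfolding Lt_tr rho_tr tr_mult by (auto intro!: arg_cong[where f=tr] split: cmp.split simp: mult.commute)

lemma cst_Dc: "degree a = 0 \<Longrightarrow> cst a \<in> Dc"
  by (simp add: Dc_def cst_def degree_map_poly)

lemma Lt_B0: "goodD D \<Longrightarrow> (D = Dc \<longrightarrow> degree a = 0) \<Longrightarrow> Lt a \<in> Bset D {0}"
  unfolding Lt_tr Bset_mem by (auto simp: goodD_def cst_Dc)

lemma decompose:
  assumes "goodD D" "v \<in> Bset D UNIV"
  shows "\<exists>r a. r \<in> Bset D {0} \<and> (D = Dc \<longrightarrow> degree a = 0) \<and> v = r + Lt a * rho"
proof -
  obtain g where v: "v = tr g" and gD: "\<forall>i. g i \<in> D" and h: "c0 (g C2) = c0 (g C1)" "c0 (g C3) = c0 (g C1)"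
    using assms(2) by (auto simp: Bset_def)
  define a where "a = c1 (g C1) + c1 (g C2) + c1 (g C3)"
  have da: "D = Dc \<longrightarrow> degree a = 0"
    using gD by (auto simp: a_def c1_Dc)
  have sa: "sP * cst a \<in> D"
    using assms(1) da goodD_mult[OF assms(1)] sP_Dc cst_Dc by (auto simp: goodD_def)
  define r where "r = tr (\<lambda>i. case i of C1 \<Rightarrow> g C1 + sP * cst a | C2 \<Rightarrow> g C2 | C3 \<Rightarrow> g C3)"
  have "r \<in> Bset D {0}"
    unfolding r_def Bset_mem using gD h sa goodD_ok[OF assms(1)]
    by (auto simp: okD_def cmp_all c0_add c1_add c0_mult c1_mult a_def algebra_simps bitpoly_char2 bp_two)
  moreover have "v = r + Lt a * rho"
    unfolding v r_def Lt_rho tr_add by (auto intro!: arg_cong[where f=tr] split: cmp.split simp: add.assoc P_char2')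
  ultimately show ?thesis using da by blast
qed

lemma Bset_UNIV_ring: "goodD D \<Longrightarrow> a \<in> Bset D UNIV \<Longrightarrow> b \<in> Bset D UNIV \<Longrightarrow> a + b \<in> Bset D UNIV \<and> a * b \<in> Bset D UNIV"
  using Bset_add Bset_mult goodD_ok okI_UNIV by blast

lemma B0_sub_UNIV: "Bset D {0} \<subseteq> Bset D UNIV" by (auto simp: Bset_def)

lemma rho_BU: "goodD D \<Longrightarrow> rho \<in> Bset D UNIV"
  unfolding rho_tr Bset_mem using goodD_ok[of D] sP_Dc
  by (auto simp: okD_def goodD_def split: cmp.split)

lemma strict_eq:
  assumes "goodD D"
  shows "strict_closure (Bset D {0}) (Full D) = Bset D UNIV"
proof
  show "strict_closure (Bset D {0}) (Full D) \<subseteq> Bset D UNIV"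
    by (rule strict_sub) (rule B0_sub_UNIV)
next
  show "Bset D UNIV \<subseteq> strict_closure (Bset D {0}) (Full D)"
  proof
    fix v assume "v \<in> Bset D UNIV"
    then obtain r a where r: "r \<in> Bset D {0}" "D = Dc \<longrightarrow> degree a = 0" "v = r + Lt a * rho"
      using decompose[OF assms] by blast
    have "r \<in> strict_closure (Bset D {0}) (Full D)"
      by (rule strict_in_B) (use r Bset_Full Full_ring[OF assms] in auto)
    moreover have "Lt a * rho \<in> strict_closure (Bset D {0}) (Full D)"
      by (rule rho_strict[OF assms Lt_B0[OF assms r(2)]])
    ultimately show "v \<in> strict_closure (Bset D {0}) (Full D)"
      unfolding r(3) by (rule strict_add) (use Full_ring[OF assms] in auto)
  qed
qed


lemma Q_bit:
  fixes l1 l2 l3 u1 u2 u3 v1 v2 v3 :: bit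
  assumes "l1 + l2 + l3 = 0" "l1 * u1 + l2 * u2 + l3 * u3 = 0" "l1 * v1 + l2 * v2 + l3 * v3 = 0"
  shows "l1 * u1 * v1 + l2 * u2 * v2 + l3 * u3 * v3 = 0"
  using assms by (cases l1; cases l2; cases l3; cases u1; cases u2; cases u3; simp)

definition VV :: "P set \<Rightarrow> bit poly set" where "VV D = (if D = Dc then {a. degree a = 0} else UNIV)"

definition QJ :: "P set \<Rightarrow> bit poly set \<Rightarrow> bool" where
  "QJ D J \<longleftrightarrow> (\<forall>l u v :: cmp \<Rightarrow> bit poly. (\<forall>i. l i \<in> VV D \<and> u i \<in> VV D \<and> v i \<in> VV D) \<longrightarrow>
     l C1 + l C2 + l C3 \<in> J \<longrightarrow> l C1 * u C1 + l C2 * u C2 + l C3 * u C3 \<in> J \<longrightarrow>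
     l C1 * v C1 + l C2 * v C2 + l C3 * v C3 \<in> J \<longrightarrow> l C1 * u C1 * v C1 + l C2 * u C2 * v C2 + l C3 * u C3 * v C3 \<in> J)"

lemma c0_VV: "p \<in> D \<Longrightarrow> c0 p \<in> VV D" by (auto simp: VV_def c0_Dc)
lemma c1_VV: "p \<in> D \<Longrightarrow> c1 p \<in> VV D" by (auto simp: VV_def c1_Dc)

lemma sr_Bset: "goodD D \<Longrightarrow> okI D I \<Longrightarrow> sr (Bset D I)"
  unfolding sr_def using Bset_add Bset_mult Bset_neg Bset_1 goodD_ok
  by (metis add_0 add.right_inverse)

lemma B0_sub: "0 \<in> I \<Longrightarrow> Bset D {0} \<subseteq> Bset D I" by (auto simp: Bset_def)

lemma G_lemma:
  assumes D: "goodD D" and oI: "okI D I" and IJ: "I \<subseteq> J" and Q: "QJ D J"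
    and a: "a \<in> nzd (Bset D I)" and b: "b \<in> Bset D I" and c: "c \<in> Bset D I"
    and u: "u \<in> int_closure (Bset D I)" and ub: "a * u = b"
    and v: "v \<in> int_closure (Bset D I)" and vc: "a * v = c" and q: "a * q = b * c"
  shows "q \<in> Bset D J"
proof -
  have I0: "0 \<in> I" using oI by (simp add: okI_def)
  have ic: "int_closure (Bset D I) = Full D"
    by (rule intcl_eq[OF D B0_sub[OF I0] Bset_Full sr_Bset[OF D oI]])
  have nz: "nzd (Bset D I) = {b \<in> Bset D I. \<forall>i. b i \<noteq> 0}" by (rule nzd_eq[OF D B0_sub[OF I0]])
  from a nz obtain ga where ga: "a = tr ga" "\<forall>i. ga i \<in> D" "c0 (ga C2) = c0 (ga C1)" "c0 (ga C3) = c0 (ga C1)"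
     "c1 (ga C1) + c1 (ga C2) + c1 (ga C3) \<in> I" and anz: "\<forall>i. a i \<noteq> 0" by (auto simp: Bset_def)
  from u ic obtain gu where gu: "u = tr gu" "\<forall>i. gu i \<in> D" by (auto simp: Full_def)
  from v ic obtain gv where gv: "v = tr gv" "\<forall>i. gv i \<in> D" by (auto simp: Full_def)
  have au: "c0 (ga C2 * gu C2) = c0 (ga C1 * gu C1)" "c0 (ga C3 * gu C3) = c0 (ga C1 * gu C1)"
     "c1 (ga C1 * gu C1) + c1 (ga C2 * gu C2) + c1 (ga C3 * gu C3) \<in> I"
    using b unfolding ub[symmetric] ga(1) gu(1) tr_mult Bset_mem by auto
  have av: "c0 (ga C2 * gv C2) = c0 (ga C1 * gv C1)" "c0 (ga C3 * gv C3) = c0 (ga C1 * gv C1)"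
     "c1 (ga C1 * gv C1) + c1 (ga C2 * gv C2) + c1 (ga C3 * gv C3) \<in> I"
    using c unfolding vc[symmetric] ga(1) gv(1) tr_mult Bset_mem by auto
  have qe: "q = tr (\<lambda>i. ga i * gu i * gv i)"
  proof (rule ext)
    fix i
    have "(a * q) i = (a * u * (a * v)) i" using q ub vc by simp
    then have "a i * q i = a i * (a i * u i * v i)" by (simp add: ac_simps)
    then have "q i = a i * u i * v i" using anz by simp
    then show "q i = tr (\<lambda>i. ga i * gu i * gv i) i" by (simp add: ga gu gv emb_mult)
  qed
  let ?\<alpha> = "c0 (ga C1)"
  let ?l = "\<lambda>i. c1 (ga i)" and ?u = "\<lambda>i. c0 (gu i)" and ?v = "\<lambda>i. c0 (gv i)"
  have DD: "ga i * gu i * gv i \<in> D" for i using ga(2) gu(2) gv(2) goodD_mult[OF D] by blast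
  show ?thesis
  proof (cases "?\<alpha> = 0")
    case True
    have c0z: "c0 (ga i) = 0" for i using True ga by (cases i) auto
    have c0q: "c0 (ga i * gu i * gv i) = 0" for i by (simp add: c0_mult c0z)
    have c1q: "c1 (ga i * gu i * gv i) = ?l i * ?u i * ?v i" for i
      by (simp add: c1_mult c0_mult c0z)
    have c1au: "c1 (ga i * gu i) = ?l i * ?u i" for i by (simp add: c1_mult c0z)
    have c1av: "c1 (ga i * gv i) = ?l i * ?v i" for i by (simp add: c1_mult c0z)
    have h: "\<forall>i. ?l i \<in> VV D \<and> ?u i \<in> VV D \<and> ?v i \<in> VV D"
      using ga(2) gu(2) gv(2) c1_VV c0_VV by blast
    have j1: "?l C1 + ?l C2 + ?l C3 \<in> J" using ga(5) IJ by blast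
    have j2: "?l C1 * ?u C1 + ?l C2 * ?u C2 + ?l C3 * ?u C3 \<in> J" using au(3) IJ unfolding c1au by blast
    have j3: "?l C1 * ?v C1 + ?l C2 * ?v C2 + ?l C3 * ?v C3 \<in> J" using av(3) IJ unfolding c1av by blast
    have "?l C1 * ?u C1 * ?v C1 + ?l C2 * ?u C2 * ?v C2 + ?l C3 * ?u C3 * ?v C3 \<in> J"
      using Q[unfolded QJ_def, rule_format, OF h[rule_format] j1 j2 j3] .
    then show ?thesis unfolding qe Bset_mem using DD by (simp add: c0q c1q)
  next
    case False
    have ai: "c0 (ga i) = ?\<alpha>" for i using ga(3,4) by (cases i) simp_all
    have "c0 (ga C1) * c0 (gu C2) = c0 (ga C1) * c0 (gu C1)" "c0 (ga C1) * c0 (gu C3) = c0 (ga C1) * c0 (gu C1)"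
      using au(1,2) ga(3,4) by (simp_all add: c0_mult)
    then have u23: "c0 (gu C2) = c0 (gu C1)" "c0 (gu C3) = c0 (gu C1)" using False by simp_all
    have "c0 (ga C1) * c0 (gv C2) = c0 (ga C1) * c0 (gv C1)" "c0 (ga C1) * c0 (gv C3) = c0 (ga C1) * c0 (gv C1)"
      using av(1,2) ga(3,4) by (simp_all add: c0_mult)
    then have v23: "c0 (gv C2) = c0 (gv C1)" "c0 (gv C3) = c0 (gv C1)" using False by simp_all
    have ui: "c0 (gu i) = c0 (gu C1)" for i using u23 by (cases i) simp_all
    have vi: "c0 (gv i) = c0 (gv C1)" for i using v23 by (cases i) simp_all
    let ?X = "c1 (ga C1 * gu C1) + c1 (ga C2 * gu C2) + c1 (ga C3 * gu C3)"
    let ?Y = "c1 (ga C1 * gv C1) + c1 (ga C2 * gv C2) + c1 (ga C3 * gv C3)"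
    let ?L = "c1 (ga C1) + c1 (ga C2) + c1 (ga C3)"
    have tot: "c1 (ga C1 * gu C1 * gv C1) + c1 (ga C2 * gu C2 * gv C2) + c1 (ga C3 * gu C3 * gv C3)
       = c0 (gv C1) * ?X + c0 (gu C1) * ?Y + c0 (gu C1 * gv C1) * ?L"
      by (simp add: c1_mult c0_mult ga(3,4) u23 v23 algebra_simps bp_two)
    have "c0 (gv C1) * ?X \<in> I" "c0 (gu C1) * ?Y \<in> I" "c0 (gu C1 * gv C1) * ?L \<in> I"
      using oI au(3) av(3) ga(5) gu(2) gv(2) goodD_mult[OF D] unfolding okI_def by blast+
    then have "c1 (ga C1 * gu C1 * gv C1) + c1 (ga C2 * gu C2 * gv C2) + c1 (ga C3 * gu C3 * gv C3) \<in> J"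
      unfolding tot using oI IJ unfolding okI_def by blast
    moreover have "c0 (ga i * gu i * gv i) = c0 (ga C1 * gu C1 * gv C1)" for i
      using ai[of i] ui[of i] vi[of i] by (simp add: c0_mult)
    ultimately show ?thesis unfolding qe Bset_mem using DD by simp
  qed
qed


lemma wa_step_sub:
  assumes D: "goodD D" and oI: "okI D I" and oJ: "okI D J" and IJ: "I \<subseteq> J" and Q: "QJ D J"
  shows "wa_step (Bset D I) \<subseteq> Bset D J"
  unfolding wa_step_def
proof (rule ring_gen_Bset[OF goodD_ok[OF D] oJ])
  show "Bset D I \<union> {q \<in> tot_quot (Bset D I). \<exists>a\<in>nzd (Bset D I). \<exists>b\<in>Bset D I. \<exists>c\<in>Bset D I.
      (\<exists>u\<in>int_closure (Bset D I). a * u = b) \<and> (\<exists>v\<in>int_closure (Bset D I). a * v = c) \<and> a * q = b * c}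
    \<subseteq> Bset D J"
  proof (rule Un_least)
    show "Bset D I \<subseteq> Bset D J" using IJ by (auto simp: Bset_def)
  next
    show "{q \<in> tot_quot (Bset D I). \<exists>a\<in>nzd (Bset D I). \<exists>b\<in>Bset D I. \<exists>c\<in>Bset D I.
      (\<exists>u\<in>int_closure (Bset D I). a * u = b) \<and> (\<exists>v\<in>int_closure (Bset D I). a * v = c) \<and> a * q = b * c}
     \<subseteq> Bset D J"
      using G_lemma[OF D oI IJ Q] by blast
  qed
qed

lemma wa_step_super: "B \<subseteq> wa_step B"
  unfolding wa_step_def by (auto intro: ring_gen.gen)

lemma const_form: "degree (a::bit poly) = 0 \<Longrightarrow> a = [:coeff a 0:]"
  by (metis degree_0_id)

lemma const_mult: "[:a::'a::comm_ring_1:] * [:b:] = [:a * b:]" by simp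
lemma const_add: "[:a::'a::comm_ring_1:] + [:b:] = [:a + b:]" by simp

lemma QJ_Dc: "QJ Dc {0}"
  unfolding QJ_def VV_def
proof (intro allI impI)
  fix l u v :: "cmp \<Rightarrow> bit poly"
  assume h: "\<forall>i. l i \<in> (if Dc = Dc then {a. degree a = 0} else UNIV) \<and> u i \<in> (if Dc = Dc then {a. degree a = 0} else UNIV) \<and>
      v i \<in> (if Dc = Dc then {a. degree a = 0} else UNIV)"
    and s1: "l C1 + l C2 + l C3 \<in> {0}" and s2: "l C1 * u C1 + l C2 * u C2 + l C3 * u C3 \<in> {0}"
    and s3: "l C1 * v C1 + l C2 * v C2 + l C3 * v C3 \<in> {0}"
  have f: "l i = [:coeff (l i) 0:]" "u i = [:coeff (u i) 0:]" "v i = [:coeff (v i) 0:]" for i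
    using h const_form by auto
  have e1: "coeff (l C1) 0 + coeff (l C2) 0 + coeff (l C3) 0 = 0"
    using arg_cong[OF s1[simplified], of "\<lambda>p. coeff p 0"] by simp
  have e2: "coeff (l C1) 0 * coeff (u C1) 0 + coeff (l C2) 0 * coeff (u C2) 0 + coeff (l C3) 0 * coeff (u C3) 0 = 0"
    using arg_cong[OF s2[simplified], of "\<lambda>p. coeff p 0"] by (simp add: coeff_mult_0)
  have e3: "coeff (l C1) 0 * coeff (v C1) 0 + coeff (l C2) 0 * coeff (v C2) 0 + coeff (l C3) 0 * coeff (v C3) 0 = 0"
    using arg_cong[OF s3[simplified], of "\<lambda>p. coeff p 0"] by (simp add: coeff_mult_0)
  have "coeff (l C1) 0 * coeff (u C1) 0 * coeff (v C1) 0 + coeff (l C2) 0 * coeff (u C2) 0 * coeff (v C2) 0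
      + coeff (l C3) 0 * coeff (u C3) 0 * coeff (v C3) 0 = 0"
    by (rule Q_bit[OF e1 e2 e3])
  then have "[:coeff (l C1) 0:] * [:coeff (u C1) 0:] * [:coeff (v C1) 0:] + [:coeff (l C2) 0:] * [:coeff (u C2) 0:] * [:coeff (v C2) 0:]
      + [:coeff (l C3) 0:] * [:coeff (u C3) 0:] * [:coeff (v C3) 0:] = 0"
    by (simp only: const_mult const_add pCons_0_0)
  then show "l C1 * u C1 * v C1 + l C2 * u C2 * v C2 + l C3 * u C3 * v C3 \<in> {0}"
    using f by (metis singletonI)
qed

definition I1 :: "bit poly set" where "I1 = {f. poly f 0 = 0 \<and> poly f 1 = 0}"

lemma okI_I1: "okI D I1" by (simp add: okI_def I1_def)

lemma QJ_I1: "QJ D I1"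
  unfolding QJ_def I1_def
proof (intro allI impI)
  fix l u v :: "cmp \<Rightarrow> bit poly"
  assume s1: "l C1 + l C2 + l C3 \<in> {f. poly f 0 = 0 \<and> poly f 1 = 0}" and s2: "l C1 * u C1 + l C2 * u C2 + l C3 * u C3 \<in> {f. poly f 0 = 0 \<and> poly f 1 = 0}"
    and s3: "l C1 * v C1 + l C2 * v C2 + l C3 * v C3 \<in> {f. poly f 0 = 0 \<and> poly f 1 = 0}"
  have "poly (l C1 * u C1 * v C1 + l C2 * u C2 * v C2 + l C3 * u C3 * v C3) x = 0" if x: "x = 0 \<or> x = 1" for x
  proof -
    have e1: "poly (l C1) x + poly (l C2) x + poly (l C3) x = 0" using s1 x by auto
    have e2: "poly (l C1) x * poly (u C1) x + poly (l C2) x * poly (u C2) x + poly (l C3) x * poly (u C3) x = 0"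
      using s2 x by auto
    have e3: "poly (l C1) x * poly (v C1) x + poly (l C2) x * poly (v C2) x + poly (l C3) x * poly (v C3) x = 0"
      using s3 x by auto
    show ?thesis using Q_bit[OF e1 e2 e3] by simp
  qed
  then show "l C1 * u C1 * v C1 + l C2 * u C2 * v C2 + l C3 * u C3 * v C3 \<in> {f. poly f 0 = 0 \<and> poly f 1 = 0}"
    by simp
qed

lemma wa_AA: "wa_step AA = AA"
  using wa_step_sub[OF _ okI_0 okI_0 _ QJ_Dc] wa_step_super[of AA] unfolding AA_eq
  by (auto simp: goodD_def)

lemma wa_R1: "wa_step (Bset UNIV I1) = Bset UNIV I1"
  using wa_step_sub[OF _ okI_I1 okI_I1 _ QJ_I1] wa_step_super[of "Bset UNIV I1"]
  by (auto simp: goodD_def)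

lemma wa_RR_sub: "wa_step RR \<subseteq> Bset UNIV I1"
  unfolding RR_eq using wa_step_sub[OF _ okI_0 okI_I1 _ QJ_I1] by (auto simp: goodD_def I1_def)


lemma c2x: "(x::bit poly) + x = 0" by (rule bitpoly_char2)

lemma id1: fixes p t f :: "bit poly" assumes "f = t * (1 + t) * p"
  shows "p * t * ((1 + t) * (1 + t)) + p * (1 + t) * (t * t) + p * (0 * 0) + f = 0"
proof -
  let ?A = "p * t * (1 + t)"
  have "p * t * ((1 + t) * (1 + t)) + p * (1 + t) * (t * t) + p * (0 * 0) + f = (?A + ?A) + (?A * t + ?A * t)"
    unfolding assms by (simp add: algebra_simps)
  then show ?thesis by (simp only: c2x add_0)
qed

lemma id2: fixes p t :: "bit poly" shows "p * t + p * (1 + t) + p = 0"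
proof -
  have "p * t + p * (1 + t) + p = (p * t + p * t) + (p + p)" by (simp add: algebra_simps)
  then show ?thesis by (simp only: c2x add_0)
qed

lemma id3: fixes p t :: "bit poly" shows "p * t * (1 + t) + p * (1 + t) * t + p * 0 = 0"
proof -
  have "p * t * (1 + t) + p * (1 + t) * t + p * 0 = (p * t * (1 + t) + p * t * (1 + t))" by (simp add: algebra_simps)
  then show ?thesis by (simp only: c2x add_0)
qed

lemma I1_dvd: assumes "f \<in> I1" shows "\<exists>p. f = [:0,1:] * (1 + [:0,1:]) * p"
proof -
  have "poly f 0 = 0" "poly f 1 = 0" using assms by (auto simp: I1_def)
  from this(1) have "[:-0, 1:] dvd f" by (simp only: poly_eq_0_iff_dvd)
  then obtain g where g: "f = [:0,1:] * g" by (auto elim: dvdE)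
  have "poly g 1 = 0" using \<open>poly f 1 = 0\<close> g by simp
  then have "[:-1, 1:] dvd g" by (simp only: poly_eq_0_iff_dvd)
  then obtain h where h: "g = [:-1, 1:] * h" by (auto elim: dvdE)
  have "[:-1, 1:] = (1 + [:0,1:] :: bit poly)" by (simp add: one_pCons)
  then show ?thesis using g h by (metis mult.assoc)
qed

lemma c0_lin[simp]: "c0 (sP * cst l + sP ^ 2 * cst w) = 0"
  by (simp add: c0_add c0_mult power2_eq_square)
lemma c1_lin[simp]: "c1 (sP * cst l + sP ^ 2 * cst w) = l"
  by (simp add: c1_add c1_mult c0_mult power2_eq_square)

lemma c0_sPx[simp]: "c0 (sP * x) = 0" by (simp add: c0_mult)
lemma c1_sPcst[simp]: "c1 (sP * cst l) = l" by (simp add: c1_mult c0_mult)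
lemma c0_sP2x[simp]: "c0 (sP ^ 2 * x) = 0" by (simp add: c0_mult)
lemma c1_sP2x[simp]: "c1 (sP ^ 2 * x) = 0" by (simp add: c1_mult c0_mult)

lemma lin_nz: "sP * cst l + sP ^ 2 \<noteq> 0"
proof
  assume h: "sP * cst l + sP ^ 2 = 0"
  have "sP * (cst l + sP) = 0" using h by (simp add: algebra_simps power2_eq_square)
  moreover have "sP \<noteq> 0" by (simp add: sP_def)
  ultimately have "cst l + sP = 0" by simp
  then have "c1 (cst l + sP) = 0" by simp
  then show False by (simp add: c1_add)
qed

lemma RR_int: "int_closure RR = Full UNIV"
  unfolding RR_eq
  by (rule intcl_eq) (auto simp: goodD_def Bset_Full sr_Bset okI_0)

lemma RR_nzd: "nzd RR = {b \<in> RR. \<forall>i. b i \<noteq> 0}"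
  unfolding RR_eq by (rule nzd_eq) (auto simp: goodD_def)

lemma rho_gen:
  assumes "f \<in> I1"
  shows "Lt f * rho \<in> wa_step RR"
proof -
  obtain p where f: "f = [:0,1:] * (1 + [:0,1:]) * p" using I1_dvd[OF assms] by blast
  define t :: "bit poly" where "t = [:0,1:]"
  define lt where "lt = (\<lambda>i. case i of C1 \<Rightarrow> p * t | C2 \<Rightarrow> p * (1 + t) | C3 \<Rightarrow> p)"
  define ut where "ut = (\<lambda>i. case i of C1 \<Rightarrow> 1 + t | C2 \<Rightarrow> t | C3 \<Rightarrow> (0::bit poly))"
  define a where "a = tr (\<lambda>i. sP * cst (lt i) + sP ^ 2 * cst 1)"
  define u where "u = tr (\<lambda>i. cst (ut i))"
  define q where "q = a * u * u"
  have a_eq: "a * u = tr (\<lambda>i. sP * cst (lt i * ut i) + sP ^ 2 * cst (ut i))"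
    unfolding a_def u_def tr_mult by (rule arg_cong[where f=tr]) (simp add: cst_mult algebra_simps)
  have q_eq: "q = tr (\<lambda>i. sP * cst (lt i * (ut i * ut i)) + sP ^ 2 * cst (ut i * ut i))"
    unfolding q_def a_eq unfolding u_def tr_mult by (rule arg_cong[where f=tr]) (simp add: cst_mult algebra_simps)
  have s1: "lt C1 + lt C2 + lt C3 = 0" unfolding lt_def cmp.case by (rule id2)
  have aR: "a \<in> RR" unfolding RR_eq a_def Bset_mem
    by (simp add: s1 del: cst_1)
  have anz: "\<forall>i. a i \<noteq> 0" unfolding a_def using lin_nz by (simp add: emb_eq_0)
  have an: "a \<in> nzd RR" using aR anz RR_nzd by simp
  have s2: "lt C1 * ut C1 + lt C2 * ut C2 + lt C3 * ut C3 = 0" unfolding lt_def ut_def cmp.case by (rule id3)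
  have auR: "a * u \<in> RR" unfolding RR_eq a_eq Bset_mem
    by (simp add: s2)
  have uI: "u \<in> int_closure RR" unfolding RR_int u_def Full_mem by simp
  have "a * q = (a * u) * (a * u)" unfolding q_def by (simp add: ac_simps)
  then have "a * q \<in> RR" using auR RR_ring(2) by simp
  then have qT: "q \<in> tot_quot RR" using an by (auto simp: tot_quot_def)
  have qW: "q \<in> wa_step RR" unfolding wa_step_def
    by (rule ring_gen.gen, rule UnI2) (use qT an auR uI \<open>a * q = (a * u) * (a * u)\<close> in blast)
  have s3: "lt C1 * (ut C1 * ut C1) + lt C2 * (ut C2 * ut C2) + lt C3 * (ut C3 * ut C3) + f = 0"
    unfolding lt_def ut_def cmp.case by (rule id1) (simp add: f t_def)
  have s3': "f = lt C1 * (ut C1 * ut C1) + lt C2 * (ut C2 * ut C2) + lt C3 * (ut C3 * ut C3)"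
    using s3 neg_eq_iff_add_eq_0[of "lt C1 * (ut C1 * ut C1) + lt C2 * (ut C2 * ut C2) + lt C3 * (ut C3 * ut C3)" f]
    by (simp add: bitpoly_neg)
  have "q + Lt f * rho \<in> RR"
    unfolding RR_eq q_eq Lt_rho tr_add Bset_mem
    by (simp add: c1_add c0_add s3' add_ac bp_two c2x del: cst_1)
  then have rW: "q + Lt f * rho \<in> wa_step RR" using wa_step_super by blast
  have "Lt f * rho = (q + Lt f * rho) + q" by (simp add: ac_simps T_char2 add.assoc[symmetric])
  moreover have "(q + Lt f * rho) + q \<in> wa_step RR"
    using ring_gen.add[OF rW[unfolded wa_step_def] qW[unfolded wa_step_def]] by (simp only: wa_step_def)
  ultimately show ?thesis by simp
qed


lemma RR_sub_R1: "RR \<subseteq> Bset UNIV I1" unfolding RR_eq by (rule B0_sub) (simp add: I1_def)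

lemma R1_ring: "a \<in> Bset UNIV I1 \<Longrightarrow> b \<in> Bset UNIV I1 \<Longrightarrow> a + b \<in> Bset UNIV I1"
  using Bset_add[OF okD_UNIV okI_I1] by blast

lemma Lt_rho_mem: "Lt a * rho \<in> Bset D J \<Longrightarrow> a \<in> J"
  unfolding Lt_rho Bset_mem by simp

lemma wa_RR: "wa_step RR = Bset UNIV I1"
proof
  show "wa_step RR \<subseteq> Bset UNIV I1" by (rule wa_RR_sub)
next
  show "Bset UNIV I1 \<subseteq> wa_step RR"
  proof
    fix v assume v: "v \<in> Bset UNIV I1"
    then have "v \<in> Bset UNIV UNIV" by (auto simp: Bset_def)
    then obtain r a where r: "r \<in> Bset UNIV {0}" "v = r + Lt a * rho"
      using decompose[of UNIV v] by (auto simp: goodD_def)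
    have rR: "r \<in> RR" using r RR_eq by simp
    have "Lt a * rho = v + r" using r(2) by (simp add: ac_simps T_char2 add.assoc[symmetric])
    moreover have "v + r \<in> Bset UNIV I1" using R1_ring[OF v] rR RR_sub_R1 by blast
    ultimately have "a \<in> I1" using Lt_rho_mem by metis
    then have "Lt a * rho \<in> wa_step RR" by (rule rho_gen)
    moreover have "r \<in> wa_step RR" using rR wa_step_super by blast
    ultimately show "v \<in> wa_step RR" unfolding r(2) wa_step_def by (rule ring_gen.add[rotated])
  qed
qed

lemma iter_RR: "(wa_step ^^ Suc n) RR = Bset UNIV I1"
  by (induct n) (simp_all add: wa_RR wa_R1)

lemma wa_closure_RR: "wa_closure RR = Bset UNIV I1"
proof -
  have "(wa_step ^^ n) RR \<subseteq> Bset UNIV I1" for n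
    by (cases n) (simp_all add: RR_sub_R1 iter_RR del: funpow.simps)
  moreover have "(wa_step ^^ 1) RR = Bset UNIV I1" using iter_RR[of 0] by simp
  ultimately show ?thesis unfolding wa_closure_def by blast
qed

lemma wa_closure_AA: "wa_closure AA = AA"
proof -
  have "(wa_step ^^ n) AA = AA" for n by (induct n) (simp_all add: wa_AA)
  then show ?thesis unfolding wa_closure_def by simp
qed

lemma AA_int: "int_closure AA = Full Dc"
  unfolding AA_eq by (rule intcl_eq) (auto simp: goodD_def Bset_Full sr_Bset okI_0)

lemma Astar_eq: "strict_closure AA (int_closure AA) = Bset Dc UNIV"
  unfolding AA_int unfolding AA_eq by (rule strict_eq) (simp add: goodD_def)

lemma Rstar_eq: "strict_closure RR (int_closure RR) = Bset UNIV UNIV"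
  unfolding RR_int unfolding RR_eq by (rule strict_eq) (simp add: goodD_def)

lemma Lt_hom: "is_hom Lt"
  unfolding Lt_def[abs_def] by (rule poly_map_hom[OF kemb_T_hom])

lemma kz_eq: "ring_gen (kk \<union> {zz}) = range Lt"
proof
  show "ring_gen (kk \<union> {zz}) \<subseteq> range Lt"
  proof
    fix x assume "x \<in> ring_gen (kk \<union> {zz})"
    then show "x \<in> range Lt"
    proof (induct rule: ring_gen.induct)
      case (gen s)
      then show ?case
      proof
        assume "s \<in> kk"
        then obtain b where "s = kemb b" by (auto simp: kk_def)
        then show ?thesis using Lt_const[of b] by (metis rangeI)
      next
        assume "s \<in> {zz}"
        then have "s = Lt [:0, 1:]" by (simp add: Lt_def map_poly_pCons)
        then show ?thesis by simp
      qed
    next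
      case one
      have "1 = Lt 1" using hom_1[OF Lt_hom] by simp
      then show ?case by (rule image_eqI) simp
    next
      case (add u v)
      then obtain a b where "u = Lt a" "v = Lt b" by auto
      then have "u + v = Lt (a + b)" using hom_add[OF Lt_hom, of a b] by simp
      then show ?case by (rule image_eqI) simp
    next
      case (neg u)
      then obtain a where "u = Lt a" by auto
      then have "- u = Lt (- a)" using hom_uminus[OF Lt_hom, of a] by simp
      then show ?case by (rule image_eqI) simp
    next
      case (mult u v)
      then obtain a b where "u = Lt a" "v = Lt b" by auto
      then have "u * v = Lt (a * b)" using hom_mult[OF Lt_hom, of a b] by simp
      then show ?case by (rule image_eqI) simp
    qed
  qed
next
  show "range Lt \<subseteq> ring_gen (kk \<union> {zz})"
  proof
    fix x assume "x \<in> range Lt"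
    then obtain a where "x = Lt a" by auto
    moreover have "Lt a \<in> ring_gen (kk \<union> {zz})"
      unfolding Lt_def by (rule poly_map_in_ring_gen) (auto simp: kk_def intro: ring_gen.gen)
    ultimately show "x \<in> ring_gen (kk \<union> {zz})" by simp
  qed
qed


definition sdiv :: "P \<Rightarrow> P" where "sdiv p = map_poly (poly_shift 1) p"

lemma sdiv_eq: "c0 p = 0 \<Longrightarrow> p = sP * sdiv p"
proof (rule poly_eqI)
  fix n assume h: "c0 p = 0"
  have "coeff (coeff p n) 0 = 0" using arg_cong[OF h, of "\<lambda>x. coeff x n"] by (simp add: coeff_c0)
  moreover have "coeff (sP * sdiv p) n = [:0, 1:] * poly_shift 1 (coeff p n)"
    by (simp add: sP_def sdiv_def coeff_map_poly)
  moreover have "q = [:0, 1:] * poly_shift 1 q" if "coeff q 0 = 0" for q :: "bit poly"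
  proof (rule poly_eqI)
    fix k show "coeff q k = coeff ([:0, 1:] * poly_shift 1 q) k"
      using that by (cases k) (simp_all add: coeff_poly_shift)
  qed
  ultimately show "coeff p n = coeff (sP * sdiv p) n" by simp
qed

lemma c0_sdiv: "c0 (sdiv p) = c1 p"
  by (rule poly_eqI) (simp add: coeff_c0 coeff_c1 sdiv_def coeff_map_poly coeff_poly_shift)

lemma sdiv_Dc: "p \<in> Dc \<Longrightarrow> sdiv p \<in> Dc"
  using map_poly_degree_leq[of "poly_shift 1" p] by (simp add: Dc_def sdiv_def)

definition xg :: "cmp \<Rightarrow> T" where "xg i = tr (\<lambda>j. if j = i then 0 else sP)"

lemma xg_eqs: "xg C1 = xx" "xg C2 = yy" "xg C3 = xx + yy"
proof -
  show "xg C1 = xx" unfolding xg_def xx_tr by (rule arg_cong[where f=tr]) (auto split: cmp.split)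
  show "xg C2 = yy" unfolding xg_def yy_tr by (rule arg_cong[where f=tr]) (auto split: cmp.split)
  show "xg C3 = xx + yy" unfolding xg_def xxyy_tr by (rule arg_cong[where f=tr]) (auto split: cmp.split)
qed

lemma ker_sup: assumes "goodD D" "r \<in> Bset D {0}" shows "xg i * r \<in> Bset D {0}" "(xg i * r) i = 0"
proof -
  have "xg i \<in> Bset D {0}"
    using xg_eqs xx_B0[OF assms(1)] yy_B0[OF assms(1)] B0_ring[OF assms(1)] by (cases i) auto
  then show "xg i * r \<in> Bset D {0}" using B0_ring[OF assms(1)] assms(2) by blast
  show "(xg i * r) i = 0" by (simp add: xg_def)
qed

lemma ker_sub:
  assumes D: "goodD D" and v: "v \<in> Bset D {0}" and vi: "v i = 0"
  shows "\<exists>r\<in>Bset D {0}. v = xg i * r"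
proof -
  obtain g where vg: "v = tr g" and gD: "\<forall>j. g j \<in> D" and h: "c0 (g C2) = c0 (g C1)" "c0 (g C3) = c0 (g C1)"
    "c1 (g C1) + c1 (g C2) + c1 (g C3) = 0" using v by (auto simp: Bset_def)
  have gi: "g i = 0" using vi vg by (simp add: emb_eq_0)
  have c0z: "c0 (g j) = 0" for j using h gi by (cases i; cases j) auto
  define j0 where "j0 = (if i = C1 then C2 else C1)"
  have j0i: "j0 \<noteq> i" by (simp add: j0_def)
  define a where "a = c1 (g j0)"
  have c1e: "c1 (g j) = a" if "j \<noteq> i" for j
    using h(3) gi that unfolding a_def j0_def
    by (cases i; cases j) (auto simp: add_eq_0_iff bitpoly_neg)
  have aD: "D = Dc \<longrightarrow> degree a = 0" using gD unfolding a_def by (auto simp: c1_Dc)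
  define H where "H = cst a + sP * cst (c1 (sdiv (g C1)) + c1 (sdiv (g C2)) + c1 (sdiv (g C3)))"
  define hh where "hh = (\<lambda>j. if j = i then H else sdiv (g j))"
  have HD: "H \<in> D"
  proof (cases "D = UNIV")
    case False
    then have DD: "D = Dc" using D by (simp add: goodD_def)
    have "degree (c1 (sdiv (g C1)) + c1 (sdiv (g C2)) + c1 (sdiv (g C3))) = 0"
      using gD sdiv_Dc DD by (simp add: c1_Dc)
    then show ?thesis unfolding H_def DD using aD DD okD_Dc cst_Dc sP_Dc unfolding okD_def by simp
  qed simp
  have hD: "hh j \<in> D" for j
    using HD gD D by (auto simp: hh_def goodD_def sdiv_Dc)
  have c0h: "c0 (hh j) = a" for j
    using c1e by (auto simp: hh_def H_def c0_add c0_sdiv)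
  have sd0: "c1 (sdiv (g i)) = 0" using gi by (simp add: sdiv_def)
  have c1s: "c1 (hh C1) + c1 (hh C2) + c1 (hh C3) = 0"
    using sd0 by (cases i) (simp_all add: hh_def H_def c1_add c2x add_ac bp_two)
  have rB: "tr hh \<in> Bset D {0}" unfolding Bset_mem using hD c0h c1s by simp
  have "v = xg i * tr hh"
    unfolding vg xg_def tr_mult by (rule arg_cong[where f=tr]) (auto simp: hh_def gi sdiv_eq[OF c0z, symmetric])
  then show ?thesis using rB by blast
qed

lemma ker_eq: "goodD D \<Longrightarrow> {r \<in> Bset D {0}. r i = 0} = {xg i * r | r. r \<in> Bset D {0}}"
  using ker_sub[of D _ i] ker_sup[of D _ i] by blast


lemma Full_comp:
  assumes "goodD D"
  shows "Full D = {v. \<forall>i. \<exists>r\<in>Bset D {0}. v i = r i}"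
proof
  show "Full D \<subseteq> {v. \<forall>i. \<exists>r\<in>Bset D {0}. v i = r i}"
  proof
    fix v assume "v \<in> Full D"
    then obtain g where g: "v = tr g" "\<forall>i. g i \<in> D" by (auto simp: Full_def)
    have "\<exists>r\<in>Bset D {0}. v i = r i" for i
    proof -
      obtain w where "w \<in> Bset D {0}" "w i = emb (g i)" using lift_B0[OF assms, of "g i" i] g(2) by blast
      then show ?thesis using g(1) by (metis tr_apply)
    qed
    then show "v \<in> {v. \<forall>i. \<exists>r\<in>Bset D {0}. v i = r i}" by simp
  qed
next
  show "{v. \<forall>i. \<exists>r\<in>Bset D {0}. v i = r i} \<subseteq> Full D"
  proof
    fix v assume "v \<in> {v. \<forall>i. \<exists>r\<in>Bset D {0}. v i = r i}"
    then have h: "\<forall>i. \<exists>r\<in>Bset D {0}. v i = r i" by simp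
    have "\<exists>p\<in>D. v i = emb p" for i
    proof -
      obtain r where r: "r \<in> Bset D {0}" "v i = r i" using h by blast
      then have "r \<in> Full D" using Bset_Full by blast
      then obtain p where "p \<in> D" "r i = emb p" using Full_elem by blast
      then show ?thesis using r by auto
    qed
    then obtain g where "\<forall>i. g i \<in> D \<and> v i = emb (g i)" by metis
    then have "v = tr g" "\<forall>i. g i \<in> D" by (auto simp: fun_eq_iff)
    then show "v \<in> Full D" by (simp add: Full_mem)
  qed
qed

definition M0 :: "T set" where "M0 = {tr g | g. (\<forall>i. g i \<in> Dc) \<and> (\<forall>i. c0 (g i) = 0)}"

lemma M0_mem: "tr g \<in> M0 \<longleftrightarrow> (\<forall>i. g i \<in> Dc) \<and> (\<forall>i. c0 (g i) = 0)"
  by (auto simp: M0_def tr_inj)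

lemma M0_add: "u \<in> M0 \<Longrightarrow> v \<in> M0 \<Longrightarrow> u + v \<in> M0"
  using okD_Dc by (auto simp: M0_def tr_add tr_inj okD_def c0_add)

lemma M0_mult: "u \<in> M0 \<Longrightarrow> c \<in> Full Dc \<Longrightarrow> u * c \<in> M0"
  using okD_Dc by (auto simp: M0_def Full_def tr_mult tr_inj okD_def c0_mult)

lemma xx_M0: "xx \<in> M0" unfolding xx_tr M0_mem by (auto simp: sP_Dc const_Dc[of 0, simplified] split: cmp.split)
lemma yy_M0: "yy \<in> M0" unfolding yy_tr M0_mem by (auto simp: sP_Dc const_Dc[of 0, simplified] split: cmp.split)

lemma AA_Full: "AA \<subseteq> Full Dc" unfolding AA_eq by (rule Bset_Full)

lemma ext_ideal_eq: "ext_ideal {a * xx + b * yy | a b. a \<in> AA \<and> b \<in> AA} (Full Dc) = M0"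
proof
  show "ext_ideal {a * xx + b * yy | a b. a \<in> AA \<and> b \<in> AA} (Full Dc) \<subseteq> M0"
  proof
    fix x assume "x \<in> ext_ideal {a * xx + b * yy | a b. a \<in> AA \<and> b \<in> AA} (Full Dc)"
    then show "x \<in> M0"
    proof induct
      case zero then show ?case unfolding tr_0 M0_mem by (simp add: const_Dc[of 0, simplified])
    next
      case (prod i c)
      then obtain a b where "i = a * xx + b * yy" "a \<in> AA" "b \<in> AA" by blast
      moreover have "xx * a \<in> M0" "yy * b \<in> M0" using M0_mult xx_M0 yy_M0 AA_Full calculation by blast+
      ultimately have "i \<in> M0" using M0_add by (simp add: mult.commute)
      then show ?case using M0_mult prod by blast
    next
      case (add u v) then show ?case using M0_add by blast
    qed
  qed
next
  show "M0 \<subseteq> ext_ideal {a * xx + b * yy | a b. a \<in> AA \<and> b \<in> AA} (Full Dc)"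
  proof
    fix v assume "v \<in> M0"
    then obtain g where v: "v = tr g" and gD: "\<forall>i. g i \<in> Dc" and g0: "\<forall>i. c0 (g i) = 0" by (auto simp: M0_def)
    let ?mm = "{a * xx + b * yy | a b. a \<in> AA \<and> b \<in> AA}"
    have "xx = 1 * xx + 0 * yy" by simp
    then have xm: "xx \<in> ?mm" using AA_ring(3,4) by blast
    have "yy = 0 * xx + 1 * yy" by simp
    then have ym: "yy \<in> ?mm" using AA_ring(3,4) by blast
    define h1 where "h1 = tr (\<lambda>i. case i of C1 \<Rightarrow> sdiv (g C1) | C2 \<Rightarrow> 0 | C3 \<Rightarrow> sdiv (g C3))"
    define h2 where "h2 = tr (\<lambda>i. case i of C1 \<Rightarrow> 0 | C2 \<Rightarrow> sdiv (g C2) | C3 \<Rightarrow> 0)"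
    have h1F: "h1 \<in> Full Dc" unfolding h1_def Full_mem using gD sdiv_Dc const_Dc[of 0] by (auto split: cmp.split)
    have h2F: "h2 \<in> Full Dc" unfolding h2_def Full_mem using gD sdiv_Dc const_Dc[of 0] by (auto split: cmp.split)
    have "v = yy * h1 + xx * h2"
      unfolding v yy_tr xx_tr h1_def h2_def tr_mult tr_add
      by (rule arg_cong[where f=tr]) (auto split: cmp.split simp: sdiv_eq[OF g0[rule_format], symmetric])
    then show "v \<in> ext_ideal ?mm (Full Dc)"
      using ext_ideal.add[OF ext_ideal.prod[OF ym h1F] ext_ideal.prod[OF xm h2F]] by simp
  qed
qed


lemma goodDc: "goodD Dc" and goodU: "goodD UNIV" by (simp_all add: goodD_def)

lemma UNIV_ne_Dc: "UNIV \<noteq> Dc"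
proof
  assume "UNIV = Dc"
  then have "tP \<in> Dc" by (metis UNIV_I)
  then show False by (simp add: Dc_def tP_def)
qed

lemma tt_nz: "(1 + [:0,1:] :: bit poly) \<noteq> 0"
proof
  assume "(1 + [:0,1:] :: bit poly) = 0"
  then have "coeff (1 + [:0,1:] :: bit poly) 0 = 0" by simp
  then show False by simp
qed

lemma AstarA: "Bset Dc UNIV = {a + u | a u. a \<in> AA \<and> u \<in> M0}"
proof
  show "Bset Dc UNIV \<subseteq> {a + u | a u. a \<in> AA \<and> u \<in> M0}"
  proof
    fix v assume "v \<in> Bset Dc UNIV"
    then obtain g where v: "v = tr g" and gD: "\<forall>i. g i \<in> Dc" and h: "c0 (g C2) = c0 (g C1)" "c0 (g C3) = c0 (g C1)"
      by (auto simp: Bset_def)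
    define a where "a = Lt (c0 (g C1))"
    have ca: "degree (c0 (g C1)) = 0" using gD by (simp add: c0_Dc)
    have aA: "a \<in> AA" unfolding a_def AA_eq by (rule Lt_B0[OF goodDc]) (use ca in simp)
    have "v + a \<in> M0" unfolding v a_def Lt_tr tr_add M0_mem
      using gD h okD_Dc cst_Dc[OF ca] by (auto simp: okD_def c0_add c2x cmp_all)
    moreover have "v = a + (v + a)" by (simp add: ac_simps T_char2 T_two)
    ultimately show "v \<in> {a + u | a u. a \<in> AA \<and> u \<in> M0}" using aA by blast
  qed
next
  show "{a + u | a u. a \<in> AA \<and> u \<in> M0} \<subseteq> Bset Dc UNIV"
  proof
    fix x assume "x \<in> {a + u | a u. a \<in> AA \<and> u \<in> M0}"
    then obtain a u where x: "x = a + u" and a: "a \<in> AA" and u: "u \<in> M0" by blast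
    obtain g where ag: "a = tr g" "\<forall>i. g i \<in> Dc" "c0 (g C2) = c0 (g C1)" "c0 (g C3) = c0 (g C1)"
      using a unfolding AA_eq by (auto simp: Bset_def)
    obtain h where uh: "u = tr h" "\<forall>i. h i \<in> Dc" "\<forall>i. c0 (h i) = 0" using u by (auto simp: M0_def)
    show "x \<in> Bset Dc UNIV" unfolding x ag(1) uh(1) tr_add Bset_mem
      using ag uh okD_Dc by (auto simp: okD_def c0_add)
  qed
qed

lemma rho_Bset: "c * rho \<in> Bset D UNIV" if "c = Lt a" "goodD D" "D = Dc \<longrightarrow> degree a = 0"
  using that Bset_UNIV_ring[OF that(2) Lt_B0[OF that(2,3), THEN B0_sub_UNIV[THEN subsetD]] rho_BU[OF that(2)]] by simp

lemma AstarK: "Bset Dc UNIV = {a + c * rho | a c. a \<in> AA \<and> c \<in> kk}"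
proof
  show "Bset Dc UNIV \<subseteq> {a + c * rho | a c. a \<in> AA \<and> c \<in> kk}"
  proof
    fix v assume "v \<in> Bset Dc UNIV"
    then obtain r a where r: "r \<in> Bset Dc {0}" "degree a = 0" "v = r + Lt a * rho"
      using decompose[OF goodDc] by blast
    have "Lt a = kemb (coeff a 0)" using const_form[OF r(2)] Lt_const by metis
    then show "v \<in> {a + c * rho | a c. a \<in> AA \<and> c \<in> kk}" using r AA_eq by (auto simp: kk_def)
  qed
next
  show "{a + c * rho | a c. a \<in> AA \<and> c \<in> kk} \<subseteq> Bset Dc UNIV"
  proof
    fix x assume "x \<in> {a + c * rho | a c. a \<in> AA \<and> c \<in> kk}"
    then obtain a b where x: "x = a + kemb b * rho" and a: "a \<in> AA" by (auto simp: kk_def)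
    have "kemb b * rho \<in> Bset Dc UNIV" by (rule rho_Bset[of _ "[:b:]"]) (simp_all add: Lt_const goodDc)
    moreover have "a \<in> Bset Dc UNIV" using a AA_eq B0_sub_UNIV by blast
    ultimately show "x \<in> Bset Dc UNIV" unfolding x using Bset_UNIV_ring[OF goodDc] by blast
  qed
qed

lemma RstarK: "Bset UNIV UNIV = {r + p * rho | r p. r \<in> RR \<and> p \<in> range Lt}"
proof
  show "Bset UNIV UNIV \<subseteq> {r + p * rho | r p. r \<in> RR \<and> p \<in> range Lt}"
  proof
    fix v assume "v \<in> Bset UNIV UNIV"
    then obtain r a where r: "r \<in> Bset UNIV {0}" "v = r + Lt a * rho"
      using decompose[OF goodU] by blast
    then show "v \<in> {r + p * rho | r p. r \<in> RR \<and> p \<in> range Lt}" using RR_eq by auto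
  qed
next
  show "{r + p * rho | r p. r \<in> RR \<and> p \<in> range Lt} \<subseteq> Bset UNIV UNIV"
  proof
    fix x assume "x \<in> {r + p * rho | r p. r \<in> RR \<and> p \<in> range Lt}"
    then obtain r a where x: "x = r + Lt a * rho" and r: "r \<in> RR" by auto
    have "Lt a * rho \<in> Bset UNIV UNIV" by (rule rho_Bset) (simp_all add: goodU UNIV_ne_Dc)
    moreover have "r \<in> Bset UNIV UNIV" using r RR_eq B0_sub_UNIV by blast
    ultimately show "x \<in> Bset UNIV UNIV" unfolding x using Bset_UNIV_ring[OF goodU] by blast
  qed
qed

lemma Rstar_gen: "Bset UNIV UNIV = ring_gen (Bset Dc UNIV \<union> {zz})"
proof
  show "ring_gen (Bset Dc UNIV \<union> {zz}) \<subseteq> Bset UNIV UNIV"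
  proof (rule ring_gen_Bset[OF okD_UNIV okI_UNIV])
    show "Bset Dc UNIV \<union> {zz} \<subseteq> Bset UNIV UNIV"
      using zz_B B0_sub_UNIV by (auto simp: Bset_def)
  qed
next
  show "Bset UNIV UNIV \<subseteq> ring_gen (Bset Dc UNIV \<union> {zz})"
  proof
    fix v assume "v \<in> Bset UNIV UNIV"
    then obtain r a where r: "r \<in> RR" "v = r + Lt a * rho" using RstarK by blast
    have "RR \<subseteq> ring_gen (Bset Dc UNIV \<union> {zz})" unfolding RR_def
    proof (rule ring_gen_sub)
      have "xx \<in> Bset Dc UNIV" "yy \<in> Bset Dc UNIV" using xx_B yy_B B0_sub_UNIV by blast+
      then show "{xx, yy, zz} \<subseteq> ring_gen (Bset Dc UNIV \<union> {zz})" by (auto intro: ring_gen.gen)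
    qed
    moreover have "Lt a \<in> ring_gen (Bset Dc UNIV \<union> {zz})" by (rule Lt_in) (auto intro: ring_gen.gen)
    moreover have "rho \<in> ring_gen (Bset Dc UNIV \<union> {zz})" using rho_BU[OF goodDc] by (auto intro: ring_gen.gen)
    ultimately show "v \<in> ring_gen (Bset Dc UNIV \<union> {zz})" unfolding r(2) using r(1)
      by (auto intro: ring_gen.add ring_gen.mult)
  qed
qed

lemma Lt_tt: "Lt b * (zz * (1 + zz) * rho) = Lt ([:0,1:] * (1 + [:0,1:]) * b) * rho"
proof -
  have z: "zz = Lt [:0,1:]" by (simp add: Lt_def map_poly_pCons)
  have "Lt ([:0,1:] * (1 + [:0,1:]) * b) = Lt [:0,1:] * (Lt 1 + Lt [:0,1:]) * Lt b"
    by (simp only: hom_mult[OF Lt_hom] hom_add[OF Lt_hom])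
  then show ?thesis unfolding z using hom_1[OF Lt_hom] by (simp add: ac_simps)
qed

lemma WA_form: "Bset UNIV I1 = {r + p * (zz * (1 + zz) * rho) | r p. r \<in> RR \<and> p \<in> range Lt}"
proof
  show "Bset UNIV I1 \<subseteq> {r + p * (zz * (1 + zz) * rho) | r p. r \<in> RR \<and> p \<in> range Lt}"
  proof
    fix v assume v: "v \<in> Bset UNIV I1"
    then have "v \<in> Bset UNIV UNIV" by (auto simp: Bset_def)
    then obtain r a where r: "r \<in> Bset UNIV {0}" "v = r + Lt a * rho"
      using decompose[OF goodU] by blast
    have rR: "r \<in> RR" using r RR_eq by simp
    have "Lt a * rho = v + r" using r(2) by (simp add: ac_simps T_char2 add.assoc[symmetric])
    moreover have "v + r \<in> Bset UNIV I1" using R1_ring[OF v] rR RR_sub_R1 by blast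
    ultimately have "a \<in> I1" using Lt_rho_mem by metis
    then obtain b where "a = [:0,1:] * (1 + [:0,1:]) * b" using I1_dvd by blast
    then have "v = r + Lt b * (zz * (1 + zz) * rho)" using r(2) Lt_tt by simp
    then show "v \<in> {r + p * (zz * (1 + zz) * rho) | r p. r \<in> RR \<and> p \<in> range Lt}" using rR by blast
  qed
next
  show "{r + p * (zz * (1 + zz) * rho) | r p. r \<in> RR \<and> p \<in> range Lt} \<subseteq> Bset UNIV I1"
  proof
    fix x assume "x \<in> {r + p * (zz * (1 + zz) * rho) | r p. r \<in> RR \<and> p \<in> range Lt}"
    then obtain r b where x: "x = r + Lt b * (zz * (1 + zz) * rho)" and r: "r \<in> RR" by auto
    let ?f = "[:0,1:] * (1 + [:0,1:]) * b"
    have "?f \<in> I1" by (simp add: I1_def)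
    then have "Lt ?f * rho \<in> Bset UNIV I1" unfolding Lt_rho Bset_mem by simp
    then show "x \<in> Bset UNIV I1" unfolding x Lt_tt using R1_ring r RR_sub_R1 by blast
  qed
qed

lemma rho_notin: "rho \<notin> Bset D J" if "1 \<notin> J"
  using that unfolding rho_tr Bset_mem by simp

lemma AA_psub: "AA \<subset> Bset Dc UNIV"
  using AA_eq B0_sub_UNIV rho_BU[OF goodDc] rho_notin[of "{0}" Dc] by auto

lemma RR_psub: "RR \<subset> Bset UNIV I1"
proof -
  let ?f = "[:0,1:] * (1 + [:0,1:]) :: bit poly"
  have "?f \<in> I1" by (simp add: I1_def)
  then have "Lt ?f * rho \<in> Bset UNIV I1" unfolding Lt_rho Bset_mem by simp
  moreover have "Lt ?f * rho \<notin> RR" unfolding RR_eq Lt_rho Bset_mem using tt_nz by simp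
  ultimately show ?thesis using RR_sub_R1 by blast
qed

lemma R1_psub: "Bset UNIV I1 \<subset> Bset UNIV UNIV"
proof -
  have "1 \<notin> I1" by (simp add: I1_def)
  then have "rho \<notin> Bset UNIV I1" by (rule rho_notin)
  moreover have "Bset UNIV I1 \<subseteq> Bset UNIV UNIV" by (auto simp: Bset_def)
  ultimately show ?thesis using rho_BU[OF goodU] by blast
qed


lemma chain_mono: "(\<forall>i<n. L i \<subset> L (Suc i)) \<Longrightarrow> i \<le> j \<Longrightarrow> j \<le> n \<Longrightarrow> L i \<subseteq> L j"
proof (induct j)
  case 0 then show ?case by simp
next
  case (Suc j)
  show ?case
  proof (cases "i = Suc j")
    case False
    then have "L i \<subseteq> L j" using Suc by simp
    moreover have "L j \<subset> L (Suc j)" using Suc by simp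
    ultimately show ?thesis by blast
  qed simp
qed

lemma dich:
  assumes sm: "submod AA L" and AL: "AA \<subseteq> L" and LS: "L \<subseteq> Bset Dc UNIV"
  shows "L = AA \<or> L = Bset Dc UNIV"
proof (cases "L = AA")
  case False
  then obtain x where x: "x \<in> L" "x \<notin> AA" using AL by blast
  then obtain a b where xa: "x = a + kemb b * rho" "a \<in> AA" using LS AstarK by (auto simp: kk_def)
  have "b \<noteq> 0"
  proof
    assume "b = 0"
    then have "x = a" using xa by simp
    then show False using x xa by simp
  qed
  then have xr: "x = a + rho" using xa by simp
  have "- a \<in> L" using sm AL xa(2) by (auto simp: submod_def)
  then have rL: "rho \<in> L" using sm x(1) xr unfolding submod_def
    by (metis add.commute add_diff_cancel_left' diff_conv_add_uminus)
  have "Bset Dc UNIV \<subseteq> L"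
  proof
    fix y assume "y \<in> Bset Dc UNIV"
    then obtain a' b' where y: "y = a' + kemb b' * rho" "a' \<in> AA" using AstarK by (auto simp: kk_def)
    have "kemb b' \<in> AA" unfolding AA_def by (rule kemb_in_ring_gen)
    then have "kemb b' * rho \<in> L" using sm rL by (auto simp: submod_def)
    then show "y \<in> L" using sm y AL by (auto simp: submod_def)
  qed
  then show ?thesis using LS by blast
qed simp

lemma submod_AA: "submod AA AA"
  unfolding submod_def using AA_ring by blast

lemma submod_Astar: "submod AA (Bset Dc UNIV)"
proof -
  have A: "AA \<subseteq> Bset Dc UNIV" using AA_psub by blast
  have "0 \<in> Bset Dc UNIV" using A AA_ring(4) by blast
  moreover have "u + v \<in> Bset Dc UNIV" if "u \<in> Bset Dc UNIV" "v \<in> Bset Dc UNIV" for u v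
    using Bset_UNIV_ring[OF goodDc] that by blast
  moreover have "- u \<in> Bset Dc UNIV" if "u \<in> Bset Dc UNIV" for u using that by (rule Bset_neg)
  moreover have "a * u \<in> Bset Dc UNIV" if "a \<in> AA" "u \<in> Bset Dc UNIV" for a u
    using Bset_UNIV_ring[OF goodDc] that A by blast
  ultimately show ?thesis unfolding submod_def by blast
qed

lemma mod_len: "mod_length AA AA (Bset Dc UNIV) = 1"
proof -
  let ?S = "{n. \<exists>L. L 0 = AA \<and> L n = Bset Dc UNIV \<and> (\<forall>i<n. L i \<subset> L (Suc i)) \<and> (\<forall>i\<le>n. submod AA (L i))}"
  have "?S = {1}"
  proof
    show "{1} \<subseteq> ?S"
    proof -
      let ?L = "\<lambda>i::nat. if i = 0 then AA else Bset Dc UNIV"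
      have "?L 0 = AA \<and> ?L 1 = Bset Dc UNIV \<and> (\<forall>i<1. ?L i \<subset> ?L (Suc i)) \<and> (\<forall>i\<le>1. submod AA (?L i))"
        using AA_psub submod_AA submod_Astar by (auto simp: le_Suc_eq)
      then have "1 \<in> ?S" by (intro CollectI exI[of _ ?L])
      then show ?thesis by simp
    qed
  next
    show "?S \<subseteq> {1}"
    proof
      fix n assume "n \<in> ?S"
      then obtain L where L: "L 0 = AA" "L n = Bset Dc UNIV" "\<forall>i<n. L i \<subset> L (Suc i)" "\<forall>i\<le>n. submod AA (L i)"
        by blast
      have "n \<noteq> 0" using L(1,2) AA_psub by auto
      moreover have "\<not> n \<ge> 2"
      proof
        assume n2: "n \<ge> 2"
        have "L 0 \<subset> L 1" using L(3) n2 by simp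
        moreover have "L 1 \<subset> L 2" using L(3) n2 by (simp add: numeral_2_eq_2)
        moreover have "L 2 \<subseteq> L n" using chain_mono[OF L(3)] n2 by simp
        moreover have "submod AA (L 1)" using L(4) n2 by simp
        ultimately have "L 1 = AA \<or> L 1 = Bset Dc UNIV"
          using L(1,2) by (intro dich) auto
        then show False using \<open>L 0 \<subset> L 1\<close> \<open>L 1 \<subset> L 2\<close> \<open>L 2 \<subseteq> L n\<close> L(1,2) by blast
      qed
      ultimately show "n \<in> {1}" by simp
    qed
  qed
  then show ?thesis unfolding mod_length_def by (simp add: one_enat_def)
qed


lemma eval3_hom: "is_hom eval3"
  unfolding eval3_def[abs_def]
  by (intro poly_map_hom kemb_T_hom)

lemma eval3_RR: "eval3 f \<in> RR"
  unfolding eval3_def RR_def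
  by (intro poly_map_in_ring_gen) (auto simp: kemb_in_ring_gen intro: ring_gen.gen)

lemma eval3_gens: "eval3 polyX = xx" "eval3 polyY = yy" "eval3 [:0, 1:] = zz"
  by (simp_all add: eval3_def polyX_def polyY_def map_poly_pCons)

lemma RR_range: "RR \<subseteq> range eval3"
proof
  fix x assume "x \<in> RR"
  then show "x \<in> range eval3" unfolding RR_def
  proof (induct rule: ring_gen.induct)
    case (gen s) then show ?case using eval3_gens by (metis empty_iff insert_iff rangeI)
  next
    case one
    have "1 = eval3 1" using hom_1[OF eval3_hom] by simp
    then show ?case by (rule image_eqI) simp
  next
    case (add u v)
    then obtain a b where "u = eval3 a" "v = eval3 b" by auto
    then have "u + v = eval3 (a + b)" using hom_add[OF eval3_hom, of a b] by simp
    then show ?case by (rule image_eqI) simp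
  next
    case (neg u)
    then obtain a where "u = eval3 a" by auto
    then have "- u = eval3 (- a)" using hom_uminus[OF eval3_hom, of a] by simp
    then show ?case by (rule image_eqI) simp
  next
    case (mult u v)
    then obtain a b where "u = eval3 a" "v = eval3 b" by auto
    then have "u * v = eval3 (a * b)" using hom_mult[OF eval3_hom, of a b] by simp
    then show ?case by (rule image_eqI) simp
  qed
qed

lemma range_eval3: "range eval3 = RR"
  using RR_range eval3_RR by blast

definition ev3 :: "K \<Rightarrow> K \<Rightarrow> K \<Rightarrow> bit poly poly poly \<Rightarrow> K" where
  "ev3 x y z f = poly (map_poly (\<lambda>g. poly (map_poly (\<lambda>h. poly (map_poly kemb h) x) g) y) f) z"

lemma eval3_apply: "eval3 f i = ev3 (xx i) (yy i) (zz i) f"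
  unfolding eval3_def ev3_def
  by (simp add: eval_poly_T kemb_apply)

definition G1 :: "bit poly poly poly \<Rightarrow> P" where "G1 f = map_poly (map_poly (\<lambda>h. coeff h 0)) f"
definition G2 :: "bit poly poly poly \<Rightarrow> P" where "G2 f = map_poly (\<lambda>g. coeff g 0) f"
definition G3 :: "bit poly poly poly \<Rightarrow> P" where "G3 f = map_poly (\<lambda>g. poly g [:0, 1:]) f"

lemma ev_C1: "ev3 0 var_s var_t f = emb (G1 f)"
  unfolding ev3_def G1_def EV
  by (subst map_poly_map_poly) (simp_all add: o_def map_poly_map_poly poly_0_coeff_0 coeff_map_poly)

lemma ev_C2: "ev3 var_s 0 var_t f = emb (G2 f)"
  unfolding ev3_def G2_def EV
  by (subst map_poly_map_poly) (simp_all add: o_def poly_0_coeff_0 coeff_map_poly)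

lemma H_hom: "is_hom (\<lambda>h. poly (map_poly kemb h) (x::K))"
  by (rule poly_map_hom[OF kemb_K_hom])

lemma ev_C3: "ev3 var_s var_s var_t f = emb (G3 f)"
proof -
  let ?H = "\<lambda>h. poly (map_poly kemb h) var_s"
  have Hs: "?H [:0, 1:] = var_s" by (simp add: map_poly_pCons)
  have "poly (map_poly ?H g) var_s = ?H (poly g [:0, 1:])" for g
    using hom_poly_commute[OF H_hom, of g "[:0, 1:]"] Hs by simp
  then show ?thesis
    unfolding ev3_def G3_def EV
    by (subst map_poly_map_poly) (simp_all add: o_def)
qed

lemma eval3_zero_G: "eval3 f = 0 \<Longrightarrow> G1 f = 0 \<and> G2 f = 0 \<and> G3 f = 0"
proof -
  assume h: "eval3 f = 0"
  have "eval3 f C1 = 0" "eval3 f C2 = 0" "eval3 f C3 = 0" using h by simp_all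
  then show ?thesis
    unfolding eval3_apply using ev_C1 ev_C2 ev_C3
    by (simp add: xx_def yy_def zz_def K_neg emb_eq_0)
qed


lemma const_dvd: fixes d :: "bit poly" assumes "\<forall>n. d dvd coeff p n" shows "[:d:] dvd p"
proof -
  have "p = [:d:] * map_poly (\<lambda>x. x div d) p"
  proof (rule poly_eqI)
    fix n
    have "d * (coeff p n div d) = coeff p n" using assms[rule_format, of n] by (rule dvd_mult_div_cancel)
    then show "coeff p n = coeff ([:d:] * map_poly (\<lambda>x. x div d) p) n" by (simp add: coeff_map_poly)
  qed
  then show ?thesis by (metis dvd_triv_left)
qed

lemma const_dvd2: fixes d :: "P" assumes "\<forall>n. d dvd coeff p n" shows "[:d:] dvd p"
proof -
  have "p = [:d:] * map_poly (\<lambda>x. x div d) p"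
  proof (rule poly_eqI)
    fix n
    have "d * (coeff p n div d) = coeff p n" using assms[rule_format, of n] by (rule dvd_mult_div_cancel)
    then show "coeff p n = coeff ([:d:] * map_poly (\<lambda>x. x div d) p) n" by (simp add: coeff_map_poly)
  qed
  then show ?thesis by (metis dvd_triv_left)
qed

lemma dvd3:
  fixes c :: "bit poly poly"
  assumes h1: "map_poly (\<lambda>h. coeff h 0) c = 0" and h2: "coeff c 0 = 0" and h3: "poly c [:0,1:] = 0"
  shows "[:[:0,1:]:] * [:0,1:] * ([:[:0,1:]:] + [:0,1:]) dvd c"
proof -
  let ?X' = "[:0,1:] :: bit poly"
  let ?X = "[:?X':] :: bit poly poly" and ?Y = "[:0,1:] :: bit poly poly"
  have "poly c 0 = 0" using h2 by (simp add: poly_0_coeff_0)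
  then have "[:-0, 1:] dvd c" by (simp only: poly_eq_0_iff_dvd)
  then obtain c1 where c1: "c = ?Y * c1" by (auto elim: dvdE)
  have "?X' * poly c1 ?X' = 0" using h3 c1 by simp
  then have "poly c1 ?X' = 0" by simp
  then have "[:-?X', 1:] dvd c1" by (simp only: poly_eq_0_iff_dvd)
  moreover have "[:-?X', 1:] = ?X + ?Y" by (simp add: bitpoly_neg)
  ultimately obtain c2 where c2: "c1 = (?X + ?Y) * c2" by (auto elim: dvdE)
  let ?m = "map_poly (\<lambda>h::bit poly. coeff h 0)"
  have mm: "?m (a * b) = ?m a * ?m b" for a b by (rule map_poly_mult_hom[OF coeff0_hom])
  have ma: "?m (a + b) = ?m a + ?m b" for a b by (rule map_poly_add_hom[OF coeff0_hom])
  have "?m c = ?m ?Y * (?m ?X + ?m ?Y) * ?m c2" unfolding c1 c2 mm ma by simp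
  moreover have "?m ?Y = [:0,1:]" "?m ?X = 0" by (simp_all add: map_poly_pCons)
  ultimately have "[:0,1:] * [:0,1:] * ?m c2 = 0" using h1 by simp
  then have mc2: "?m c2 = 0" by simp
  have "?X' dvd coeff c2 n" for n
  proof -
    have "coeff (coeff c2 n) 0 = 0" using arg_cong[OF mc2, of "\<lambda>p. coeff p n"] by (simp add: coeff_map_poly)
    then have "poly (coeff c2 n) 0 = 0" by (simp add: poly_0_coeff_0)
    then have "[:-0, 1:] dvd coeff c2 n" by (simp only: poly_eq_0_iff_dvd)
    then show ?thesis by simp
  qed
  then have "?X dvd c2" using const_dvd by blast
  then obtain c3 where "c2 = ?X * c3" by (auto elim: dvdE)
  then have "c = (?X * ?Y * (?X + ?Y)) * c3" using c1 c2 by (simp add: ac_simps)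
  then show ?thesis by (metis dvd_triv_left)
qed

lemma polyd: "polyX * polyY * (polyX + polyY) = [:[:[:0,1:]:] * [:0,1:] * ([:[:0,1:]:] + [:0,1:]):]"
  unfolding polyX_def polyY_def by (simp only: const_mult const_add)

lemma G_dvd: assumes "G1 f = 0" "G2 f = 0" "G3 f = 0" shows "polyX * polyY * (polyX + polyY) dvd f"
  unfolding polyd
proof (rule const_dvd2, rule allI)
  fix n
  have "map_poly (\<lambda>h. coeff h 0) (coeff f n) = 0"
    using arg_cong[OF assms(1), of "\<lambda>p. coeff p n"] by (simp add: G1_def coeff_map_poly)
  moreover have "coeff (coeff f n) 0 = 0"
    using arg_cong[OF assms(2), of "\<lambda>p. coeff p n"] by (simp add: G2_def coeff_map_poly)
  moreover have "poly (coeff f n) [:0,1:] = 0"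
    using arg_cong[OF assms(3), of "\<lambda>p. coeff p n"] by (simp add: G3_def coeff_map_poly)
  ultimately show "[:[:0,1:]:] * [:0,1:] * ([:[:0,1:]:] + [:0,1:]) dvd coeff f n" by (rule dvd3)
qed

lemma xyz0: "xx * yy * (xx + yy) = 0"
  by (rule ext) (case_tac x; simp add: xx_def yy_def K_char2)

lemma ker_eval3: "eval3 f = 0 \<longleftrightarrow> polyX * polyY * (polyX + polyY) dvd f"
proof
  assume "eval3 f = 0"
  then show "polyX * polyY * (polyX + polyY) dvd f" using eval3_zero_G G_dvd by blast
next
  assume "polyX * polyY * (polyX + polyY) dvd f"
  then obtain g where "f = polyX * polyY * (polyX + polyY) * g" by (auto elim: dvdE)
  then have "eval3 f = xx * yy * (xx + yy) * eval3 g"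
    using eval3_gens hom_mult[OF eval3_hom] hom_add[OF eval3_hom] by simp
  then show "eval3 f = 0" by (simp add: xyz0)
qed


theorem theorem4p4:
  defines "Rbar \<equiv> int_closure RR"
      and "Abar \<equiv> int_closure AA"
      and "Rstar \<equiv> strict_closure RR (int_closure RR)"
      and "Astar \<equiv> strict_closure AA (int_closure AA)"
      and "mm \<equiv> {a * xx + b * yy | a b. a \<in> AA \<and> b \<in> AA}"
      and "kz \<equiv> ring_gen (kk \<union> {zz})"
  shows
    \<comment> \<open>(0) the model: R = k[x,y,z] is the image of U, and the kernel is (XY(X+Y))\<close>
    "range eval3 = RR \<and>
     (\<forall>f. eval3 f = 0 \<longleftrightarrow> polyX * polyY * (polyX + polyY) dvd f)
     \<comment> \<open>(1)\<close>
   \<and> Rbar = {v. \<forall>i. \<exists>r\<in>RR. v i = r i}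
   \<and> {r \<in> RR. r C1 = 0} = {xx * r | r. r \<in> RR}
   \<and> {r \<in> RR. r C2 = 0} = {yy * r | r. r \<in> RR}
   \<and> {r \<in> RR. r C3 = 0} = {(xx + yy) * r | r. r \<in> RR}
   \<and> Abar = {v. \<forall>i. \<exists>a\<in>AA. v i = a i}
   \<and> {a \<in> AA. a C1 = 0} = {xx * a | a. a \<in> AA}
   \<and> {a \<in> AA. a C2 = 0} = {yy * a | a. a \<in> AA}
   \<and> {a \<in> AA. a C3 = 0} = {(xx + yy) * a | a. a \<in> AA}
     \<comment> \<open>(2)\<close>
   \<and> rho \<in> Abar
   \<and> Astar = {a + u | a u. a \<in> AA \<and> u \<in> ext_ideal mm Abar}
   \<and> Astar = {a + c * rho | a c. a \<in> AA \<and> c \<in> kk}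
   \<and> mod_length AA AA Astar = 1
     \<comment> \<open>(3)\<close>
   \<and> wa_closure AA = AA \<and> AA \<subset> Astar
     \<comment> \<open>(4)\<close>
   \<and> Rstar = ring_gen (Astar \<union> {zz})
   \<and> Rstar = {r + p * rho | r p. r \<in> RR \<and> p \<in> kz}
   \<and> wa_closure RR = {r + p * (zz * (1 + zz) * rho) | r p. r \<in> RR \<and> p \<in> kz}
   \<and> RR \<subset> wa_closure RR \<and> wa_closure RR \<subset> Rstar"
proof -
  have Rb: "Rbar = Full UNIV" unfolding assms(1) by (rule RR_int)
  have Ab: "Abar = Full Dc" unfolding assms(2) by (rule AA_int)
  have Rs: "Rstar = Bset UNIV UNIV" unfolding assms(3) by (rule Rstar_eq)
  have As: "Astar = Bset Dc UNIV" unfolding assms(4) by (rule Astar_eq)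
  have kz: "kz = range Lt" unfolding assms(6) by (rule kz_eq)
  have c1: "Rbar = {v. \<forall>i. \<exists>r\<in>RR. v i = r i}" unfolding Rb RR_eq by (rule Full_comp[OF goodU])
  have c2: "Abar = {v. \<forall>i. \<exists>a\<in>AA. v i = a i}" unfolding Ab AA_eq by (rule Full_comp[OF goodDc])
  have kR: "{r \<in> RR. r i = 0} = {xg i * r | r. r \<in> RR}" for i unfolding RR_eq by (rule ker_eq[OF goodU])
  have kA: "{r \<in> AA. r i = 0} = {xg i * r | r. r \<in> AA}" for i unfolding AA_eq by (rule ker_eq[OF goodDc])
  have rA: "rho \<in> Abar" unfolding Ab using rho_BU[OF goodDc] Bset_Full by blast
  have a1: "Astar = {a + u | a u. a \<in> AA \<and> u \<in> ext_ideal mm Abar}"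
    unfolding As Ab assms(5) ext_ideal_eq by (rule AstarA)
  have a2: "Astar = {a + c * rho | a c. a \<in> AA \<and> c \<in> kk}" unfolding As by (rule AstarK)
  have a3: "mod_length AA AA Astar = 1" unfolding As by (rule mod_len)
  have a4: "AA \<subset> Astar" unfolding As by (rule AA_psub)
  have r1: "Rstar = ring_gen (Astar \<union> {zz})" unfolding Rs As by (rule Rstar_gen)
  have r2: "Rstar = {r + p * rho | r p. r \<in> RR \<and> p \<in> kz}" unfolding Rs kz by (rule RstarK)
  have r3: "wa_closure RR = {r + p * (zz * (1 + zz) * rho) | r p. r \<in> RR \<and> p \<in> kz}"
    unfolding wa_closure_RR kz by (rule WA_form)
  have r4: "RR \<subset> wa_closure RR" unfolding wa_closure_RR by (rule RR_psub)
  have r5: "wa_closure RR \<subset> Rstar" unfolding wa_closure_RR Rs by (rule R1_psub)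
  show ?thesis
    using range_eval3 ker_eval3 c1 kR[of C1] kR[of C2] kR[of C3] c2 kA[of C1] kA[of C2] kA[of C3]
      rA a1 a2 a3 wa_closure_AA a4 r1 r2 r3 r4 r5
    unfolding xg_eqs by blast
qed


end
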